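(* Let $f$ be a parabolic Dulac germ with $f(x)=x-ax^\alpha\boldsymbol\ell^m+o(x^\alpha\boldsymbol\ell^m)$ as $x\to0^+$, where $a>0$, $\alpha>1$, $m\in\mathbb Z$, $m\le0$. Let $g=\mathrm{id}-f$ and let $x_0>0$ be close to $0$. Let $A_f(x_0,\varepsilon)$ and $A_f^c(x_0,\varepsilon)$ be the discrete and continuous time lengths of the $\varepsilon$-neighborhood of the orbit of $x_0$ (defined below). Then $$A_f^c(x_0,\varepsilon)-A_f(x_0,\varepsilon)=\varepsilon^{2-\frac1\alpha}\boldsymbol\ell(\varepsilon)^{\frac m\alpha}\,k(\varepsilon),$$ where $k(\varepsilon)=O(1)$ as $\varepsilon\to0^+$ and $k$ is high-amplitude oscillatory at $0$; in particular $k$ has no power-logarithm asymptotic behavior, and $A_f^c(x_0,\varepsilon)-A_f(x_0,\varepsilon)=O(\varepsilon^{1+\delta})$ for some $\delta>0$.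
   Context: $\boldsymbol\ell(x)=-1/\log x$, $\boldsymbol\ell_2=\boldsymbol\ell\circ\boldsymbol\ell$. A Dulac series is $\widehat f=\sum_{i\ge1}P_i(\boldsymbol\ell^{-1})x^{\alpha_i}$ with $P_i$ real polynomials and $(\alpha_i)$ a positive, strictly increasing, finite or finitely generated sequence tending to $+\infty$. A Dulac germ is a germ $f$ analytic on some $(0,d)$ such that $f-\sum_{i\le n}P_i(\boldsymbol\ell^{-1})x^{\alpha_i}=o(x^{\alpha_n})$ for every $n$ (for a Dulac series, its Dulac expansion) and which extends to a bounded analytic function on a standard quadratic domain in the sense of Ilyashenko; it is parabolic if $P_1\equiv1$, $\alpha_1=1$ and $f\ne\mathrm{id}$. Discrete length: with $x_n=f^{\circ n}(x_0)$ and $n_\varepsilon$ the integer with $x_{n_\varepsilon}-x_{n_\varepsilon+1}\le2\varepsilon<x_{n_\varepsilon-1}-x_{n_\varepsilon}$, $A_f(x_0,\varepsilon)=x_{n_\varepsilon}+2\varepsilon+2\varepsilon n_\varepsilon$. Continuous length: $f$ is (by known results) the time-one map of the flow $\{f^t\}$ of an analytic vector field $\xi(x)\frac{d}{dx}$ on $(0,d)$ satisfying $\xi(x)\sim-ax^\alpha\boldsymbol\ell^m$, $\xi'(x)\sim-a\alpha x^{\alpha-1}\boldsymbol\ell^m$ and $\xi=-g-\tfrac12\xi\xi'+o(x^{2\alpha-1}\boldsymbol\ell^{2m})$ as $x\to0^+$, with Fatou coordinate $\Psi$, $\Psi'=1/\xi$, $\Psi(f^t(x))=\Psi(x)+t$.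 The continuous critical time $\tau_\varepsilon$ is defined by $f^{\tau_\varepsilon}(x_0)-f^{\tau_\varepsilon+1}(x_0)=2\varepsilon$, and $A^c_f(x_0,\varepsilon)=f^{\tau_\varepsilon}(x_0)+2\varepsilon+2\varepsilon\tau_\varepsilon$. A function $h$ is high-amplitude oscillatory at $0$ if there are sequences $\varepsilon_n^1\to0$, $\varepsilon_n^2\to0$ and reals $A<B$ with $h(\varepsilon_n^1)<A<B<h(\varepsilon_n^2)$ for all $n$. *)

theory Defs
  imports "HOL-Analysis.Analysis" "HOL-Library.Landau_Symbols" "HOL-Library.Extended_Nat"
          "HOL-Computational_Algebra.Polynomial"
begin

definition ell :: "real \<Rightarrow> real" where
  "ell x = - 1 / ln x"

definition real_analytic_on :: "(real \<Rightarrow> real) \<Rightarrow> real set \<Rightarrow> bool" where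
  "real_analytic_on f S \<longleftrightarrow>
     (\<forall>x\<in>S. \<exists>r>0. \<exists>c::nat \<Rightarrow> real. \<forall>y. \<bar>y - x\<bar> < r \<longrightarrow> (\<lambda>n. c n * (y - x) ^ n) sums f y)"

text \<open>Standard quadratic domain in the logarithmic chart zeta = - log z.\<close>
definition std_quad_domain :: "real \<Rightarrow> complex set" where
  "std_quad_domain C = {\<zeta>. Re \<zeta> > C * sqrt (1 + \<bar>Im \<zeta>\<bar>)}"

definition dulac_exponents :: "(nat \<Rightarrow> real) \<Rightarrow> enat \<Rightarrow> bool" where
  "dulac_exponents \<alpha> N \<longleftrightarrow>
     N \<noteq> 0 \<and> \<alpha> 0 > 0 \<and> (\<forall>i. enat (Suc i) < N \<longrightarrow> \<alpha> i < \<alpha> (Suc i)) \<and>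
     (N = \<infinity> \<longrightarrow> filterlim \<alpha> at_top sequentially \<and>
        (\<exists>G. finite G \<and> G \<subseteq> {0<..} \<and>
           (\<forall>i. \<exists>k::real \<Rightarrow> nat. \<alpha> i = (\<Sum>g\<in>G. real (k g) * g))))"

text \<open>Dulac germ with Dulac expansion sum_{i<N} P_i(ell^{-1}) x^{alpha_i} (indices from 0).\<close>
definition dulac_germ_exp ::
  "(real \<Rightarrow> real) \<Rightarrow> (nat \<Rightarrow> real poly) \<Rightarrow> (nat \<Rightarrow> real) \<Rightarrow> enat \<Rightarrow> bool" where
  "dulac_germ_exp f P \<alpha> N \<longleftrightarrow>
     dulac_exponents \<alpha> N \<and>
     (\<forall>i. enat i < N \<longrightarrow> P i \<noteq> 0) \<and>
     (\<forall>n. enat n < N \<longrightarrow>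
        (\<lambda>x. f x - (\<Sum>i\<le>n. poly (P i) (- ln x) * x powr \<alpha> i)) \<in> o[at_right 0](\<lambda>x. x powr \<alpha> n)) \<and>
     (\<exists>d>0. real_analytic_on f {0<..<d}) \<and>
     (\<exists>C>0. \<exists>F. F holomorphic_on std_quad_domain C \<and> bounded (F ` std_quad_domain C) \<and>
        (\<forall>\<^sub>F \<zeta> in at_top. F (complex_of_real \<zeta>) = complex_of_real (f (exp (- \<zeta>)))))"

definition dulac_germ :: "(real \<Rightarrow> real) \<Rightarrow> bool" where
  "dulac_germ f \<longleftrightarrow> (\<exists>P \<alpha> N. dulac_germ_exp f P \<alpha> N)"

definition parabolic_dulac_germ :: "(real \<Rightarrow> real) \<Rightarrow> bool" where
  "parabolic_dulac_germ f \<longleftrightarrow>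
     (\<exists>P \<alpha> N. dulac_germ_exp f P \<alpha> N \<and> P 0 = 1 \<and> \<alpha> 0 = 1) \<and>
     \<not> (\<forall>\<^sub>F x in at_right 0. f x = x)"

definition disc_crit :: "(real \<Rightarrow> real) \<Rightarrow> real \<Rightarrow> real \<Rightarrow> nat" where
  "disc_crit f x0 \<epsilon> = (THE n. n \<ge> 1 \<and>
      (f ^^ n) x0 - (f ^^ Suc n) x0 \<le> 2 * \<epsilon> \<and> 2 * \<epsilon> < (f ^^ (n - 1)) x0 - (f ^^ n) x0)"

definition disc_length :: "(real \<Rightarrow> real) \<Rightarrow> real \<Rightarrow> real \<Rightarrow> real" where
  "disc_length f x0 \<epsilon> = (let n = disc_crit f x0 \<epsilon> in (f ^^ n) x0 + 2 * \<epsilon> + 2 * \<epsilon> * real n)"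

text \<open>Flow f^t on (0,d) defined through the Fatou coordinate Psi: Psi(f^t x) = Psi x + t.\<close>
definition flow :: "(real \<Rightarrow> real) \<Rightarrow> real \<Rightarrow> real \<Rightarrow> real \<Rightarrow> real" where
  "flow \<Psi> d t x = (THE y. y \<in> {0<..<d} \<and> \<Psi> y = \<Psi> x + t)"

definition cont_crit :: "(real \<Rightarrow> real) \<Rightarrow> real \<Rightarrow> real \<Rightarrow> real \<Rightarrow> real" where
  "cont_crit \<Psi> d x0 \<epsilon> = (THE \<tau>. \<tau> \<ge> 0 \<and> flow \<Psi> d \<tau> x0 - flow \<Psi> d (\<tau> + 1) x0 = 2 * \<epsilon>)"

definition cont_length :: "(real \<Rightarrow> real) \<Rightarrow> real \<Rightarrow> real \<Rightarrow> real \<Rightarrow> real" where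
  "cont_length \<Psi> d x0 \<epsilon> = (let \<tau> = cont_crit \<Psi> d x0 \<epsilon> in
      flow \<Psi> d \<tau> x0 + 2 * \<epsilon> + 2 * \<epsilon> * \<tau>)"

definition high_amp_osc :: "(real \<Rightarrow> real) \<Rightarrow> bool" where
  "high_amp_osc h \<longleftrightarrow> (\<exists>e1 e2 :: nat \<Rightarrow> real. \<exists>A B. A < B \<and>
      (\<forall>n. e1 n > 0 \<and> e2 n > 0) \<and> e1 \<longlonglongrightarrow> 0 \<and> e2 \<longlonglongrightarrow> 0 \<and>
      (\<forall>n. h (e1 n) < A \<and> B < h (e2 n)))"

end

theory Submission
  imports Defs "HOL-Real_Asymp.Real_Asymp"
begin


lemma analytic_DERIV:
  assumes "real_analytic_on h S" "x \<in> S"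
  shows "(h has_real_derivative deriv h x) (at x)"
proof -
  obtain r c where r: "r > 0" and c: "\<And>y. \<bar>y - x\<bar> < r \<Longrightarrow> (\<lambda>n. c n * (y - x) ^ n) sums h y"
    using assms unfolding real_analytic_on_def by blast
  define P where "P = (\<lambda>z::real. \<Sum>n. c n * z ^ n)"
  have sm: "summable (\<lambda>n. c n * z ^ n)" if "norm z < r" for z
    using c[of "x + z"] that by (auto dest: sums_summable)
  have "(P has_real_derivative (\<Sum>n. diffs c n * 0 ^ n)) (at 0)"
    unfolding P_def by (rule termdiffs_strong'[of r]) (use sm r in auto)
  then have "((\<lambda>y. P (y - x)) has_real_derivative (\<Sum>n. diffs c n * 0 ^ n) * 1) (at x)"
    by (intro DERIV_chain2[where f = P]) (auto intro!: derivative_eq_intros)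
  then have "(h has_real_derivative (\<Sum>n. diffs c n * 0 ^ n) * 1) (at x)"
  proof (rule has_field_derivative_transform_within_open[where S = "ball x r"])
    fix y assume "y \<in> ball x r"
    then have "\<bar>y - x\<bar> < r" by (auto simp: dist_real_def)
    then show "P (y - x) = h y" using c[of y] unfolding P_def by (simp add: sums_iff)
  qed (use r in auto)
  then show ?thesis by (metis DERIV_imp_deriv)
qed




lemma ratio_tendsto:
  fixes p lo \<theta> :: "real \<Rightarrow> real"
  assumes peq: "p \<sim>[at_right 0] (\<lambda>x. C * x powr \<beta> * ell x powr \<gamma>)" and C: "C \<noteq> 0"
    and lo: "((\<lambda>y. lo y / y) \<longlongrightarrow> 1) (at_right 0)"
    and th: "\<forall>\<^sub>F y in at_right 0. 0 < lo y \<and> lo y \<le> \<theta> y \<and> \<theta> y \<le> y"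
  shows "((\<lambda>y. p (\<theta> y) / p y) \<longlongrightarrow> 1) (at_right 0)"
proof -
  define q where "q x = C * x powr \<beta> * ell x powr \<gamma>" for x
  have ellpos: "ell x > 0" if "0 < x" "x < 1" for x
    using that unfolding ell_def by (simp add: divide_neg_neg)
  have qnz: "q x \<noteq> 0" if "0 < x" "x < 1" for x
    using ellpos[OF that] that C unfolding q_def by simp
  have ev01: "\<forall>\<^sub>F x in at_right 0. 0 < x \<and> x < (1::real)"
    using eventually_at_right_real[of 0 1] by simp
  have peq': "p \<sim>[at_right 0] q" using peq unfolding q_def by simp
  have h1: "((\<lambda>x. p x / q x) \<longlongrightarrow> 1) (at_right 0)"
    by (rule asymp_equivD_strong[OF peq']) (use ev01 qnz in \<open>auto elim!: eventually_mono\<close>)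
  have th0: "(\<theta> \<longlongrightarrow> 0) (at_right 0)"
  proof (rule tendsto_sandwich[of "\<lambda>_. 0" _ _ "\<lambda>y. y"])
    show "\<forall>\<^sub>F n in at_right 0. 0 \<le> \<theta> n" using th by eventually_elim auto
    show "\<forall>\<^sub>F n in at_right 0. \<theta> n \<le> n" using th by eventually_elim auto
  qed auto
  have thlim: "filterlim \<theta> (at_right 0) (at_right 0)"
    unfolding filterlim_at using th0 th by (auto elim!: eventually_mono)
  have h2: "((\<lambda>y. p (\<theta> y) / q (\<theta> y)) \<longlongrightarrow> 1) (at_right 0)"
    using filterlim_compose[OF h1 thlim] by simp
  have h3: "((\<lambda>y. q y / p y) \<longlongrightarrow> 1) (at_right 0)"
  proof -
    have "((\<lambda>y. inverse (p y / q y)) \<longlongrightarrow> inverse 1) (at_right 0)"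
      by (rule tendsto_inverse[OF h1]) simp
    then show ?thesis by (simp add: inverse_eq_divide)
  qed
  have r1: "((\<lambda>y. \<theta> y / y) \<longlongrightarrow> 1) (at_right 0)"
  proof (rule tendsto_sandwich[of "\<lambda>y. lo y / y" _ _ "\<lambda>_. 1"])
    show "\<forall>\<^sub>F n in at_right 0. lo n / n \<le> \<theta> n / n" using th ev01
      by eventually_elim (auto intro: divide_right_mono)
    show "\<forall>\<^sub>F n in at_right 0. \<theta> n / n \<le> 1" using th ev01 by eventually_elim auto
  qed (use lo in auto)
  have lnr: "((\<lambda>y. ln (\<theta> y / y)) \<longlongrightarrow> 0) (at_right 0)"
    using tendsto_ln[OF r1] by simp
  have lny: "filterlim (\<lambda>y. ln y) at_infinity (at_right (0::real))"
    using filterlim_at_bot_imp_at_infinity[OF ln_at_0] .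
  have "((\<lambda>y. 1 + ln (\<theta> y / y) / ln y) \<longlongrightarrow> 1 + 0) (at_right 0)"
    by (intro tendsto_add tendsto_const tendsto_divide_0[OF lnr lny])
  then have "((\<lambda>y. inverse (1 + ln (\<theta> y / y) / ln y)) \<longlongrightarrow> inverse 1) (at_right 0)"
    by (intro tendsto_inverse) auto
  then have r2: "((\<lambda>y. inverse (1 + ln (\<theta> y / y) / ln y)) \<longlongrightarrow> 1) (at_right 0)" by simp
  have h4: "((\<lambda>y. (\<theta> y / y) powr \<beta> * (inverse (1 + ln (\<theta> y / y) / ln y)) powr \<gamma>) \<longlongrightarrow> 1 powr \<beta> * 1 powr \<gamma>) (at_right 0)"
    by (intro tendsto_mult tendsto_powr r1 r2 tendsto_const) auto
  have eq: "p (\<theta> y) / q (\<theta> y) * ((\<theta> y / y) powr \<beta> * (inverse (1 + ln (\<theta> y / y) / ln y)) powr \<gamma>) * (q y / p y)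
      = p (\<theta> y) / p y" if "0 < y" "y < 1" "0 < lo y" "lo y \<le> \<theta> y" "\<theta> y \<le> y" "p y \<noteq> 0" for y
  proof -
    have t0: "0 < \<theta> y" "\<theta> y < 1" using that by auto
    have lny0: "ln y < 0" "ln (\<theta> y) < 0" using that t0 by auto
    have i: "inverse (1 + ln (\<theta> y / y) / ln y) = ell (\<theta> y) / ell y"
      using lny0 t0 that by (simp add: ln_div ell_def field_simps)
    have "q (\<theta> y) / q y = (\<theta> y / y) powr \<beta> * (ell (\<theta> y) / ell y) powr \<gamma>"
      using t0 that ellpos[of y] ellpos[of "\<theta> y"] C unfolding q_def
      by (simp add: powr_divide field_simps)
    then show ?thesis unfolding i
      using qnz[of y] qnz[of "\<theta> y"] t0 that by (simp add: field_simps)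
  qed
  have "((\<lambda>y. p (\<theta> y) / q (\<theta> y) * ((\<theta> y / y) powr \<beta> * (inverse (1 + ln (\<theta> y / y) / ln y)) powr \<gamma>) * (q y / p y)) \<longlongrightarrow> 1 * (1 powr \<beta> * 1 powr \<gamma>) * 1) (at_right 0)"
    by (intro tendsto_mult h2 h3 h4)
  then have lim: "((\<lambda>y. p (\<theta> y) / q (\<theta> y) * ((\<theta> y / y) powr \<beta> * (inverse (1 + ln (\<theta> y / y) / ln y)) powr \<gamma>) * (q y / p y)) \<longlongrightarrow> 1) (at_right 0)"
    by simp
  have pnz: "\<forall>\<^sub>F y in at_right 0. p y \<noteq> 0"
    using asymp_equiv_eventually_zeros[OF peq'] ev01 by eventually_elim (use qnz in auto)
  show ?thesis
    by (rule Lim_transform_eventually[OF lim]) (use th ev01 pnz in \<open>eventually_elim, use eq in auto\<close>)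
qed

lemma ratio_uniform:
  fixes p lo :: "real \<Rightarrow> real"
  assumes peq: "p \<sim>[at_right 0] (\<lambda>x. C * x powr \<beta> * ell x powr \<gamma>)" and C: "C \<noteq> 0"
    and lo: "((\<lambda>y. lo y / y) \<longlongrightarrow> 1) (at_right 0)"
    and lo2: "\<forall>\<^sub>F y in at_right 0. 0 < lo y \<and> lo y \<le> y"
    and eta: "\<eta> > 0"
  shows "\<forall>\<^sub>F y in at_right 0. \<forall>\<theta>\<in>{lo y..y}. \<bar>p \<theta> / p y - 1\<bar> \<le> \<eta>"
proof -
  define bad where "bad y \<theta> \<longleftrightarrow> \<theta> \<in> {lo y..y} \<and> \<bar>p \<theta> / p y - 1\<bar> > \<eta>" for y \<theta>
  define th where "th y = (if \<exists>\<theta>. bad y \<theta> then SOME \<theta>. bad y \<theta> else y)" for y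
  have thb: "bad y (th y)" if "\<exists>\<theta>. bad y \<theta>" for y
    using someI_ex[OF that] that unfolding th_def by simp
  have "\<forall>\<^sub>F y in at_right 0. 0 < lo y \<and> lo y \<le> th y \<and> th y \<le> y"
    using lo2 proof eventually_elim
    case (elim y) then show ?case
      using thb[of y] unfolding th_def bad_def by (cases "\<exists>\<theta>. bad y \<theta>") auto
  qed
  from ratio_tendsto[OF peq C lo this] have "((\<lambda>y. p (th y) / p y) \<longlongrightarrow> 1) (at_right 0)" .
  then have "\<forall>\<^sub>F y in at_right 0. dist (p (th y) / p y) 1 < \<eta>"
    using eta by (rule tendstoD)
  then show ?thesis
  proof eventually_elim
    case (elim y)
    show ?case
    proof (rule ccontr)
      assume "\<not> ?case"
      then have "\<exists>\<theta>. bad y \<theta>" unfolding bad_def by force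
      from thb[OF this] elim show False unfolding bad_def dist_real_def by auto
    qed
  qed
qed




locale dulac_setup =
  fixes f \<xi> \<Psi> :: "real \<Rightarrow> real" and a \<alpha> d :: real and m :: int
  assumes pdg: "parabolic_dulac_germ f"
    and a_pos: "a > 0" and alpha_gt: "\<alpha> > 1" and m_le: "m \<le> 0"
    and hf: "(\<lambda>x. f x - (x - a * x powr \<alpha> * ell x powr of_int m))
           \<in> o[at_right 0](\<lambda>x. x powr \<alpha> * ell x powr of_int m)"
    and d_pos: "d > 0"
    and xi_an: "real_analytic_on \<xi> {0<..<d}"
    and xi_eq: "\<xi> \<sim>[at_right 0] (\<lambda>x. - a * x powr \<alpha> * ell x powr of_int m)"
    and dxi_eq: "(\<lambda>x. deriv \<xi> x) \<sim>[at_right 0] (\<lambda>x. - a * \<alpha> * x powr (\<alpha> - 1) * ell x powr of_int m)"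
    and hW: "(\<lambda>x. \<xi> x + (x - f x) + \<xi> x * deriv \<xi> x / 2)
           \<in> o[at_right 0](\<lambda>x. x powr (2 * \<alpha> - 1) * ell x powr of_int (2 * m))"
    and psi: "\<forall>x\<in>{0<..<d}. \<xi> x \<noteq> 0 \<and> (\<Psi> has_real_derivative 1 / \<xi> x) (at x)"
    and fpsi: "\<forall>x\<in>{0<..<d}. f x \<in> {0<..<d} \<and> \<Psi> (f x) = \<Psi> x + 1"
begin

definition "g x = x - f x"
definition "q0 x = x powr \<alpha> * ell x powr of_int m"
definition "W x = \<xi> x * deriv \<xi> x"
definition "\<rho> x = x powr (2 * \<alpha> - 1) * ell x powr of_int (2 * m)"

lemma ell_pos: "0 < x \<Longrightarrow> x < 1 \<Longrightarrow> ell x > 0"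
  unfolding ell_def by (simp add: divide_neg_neg)

lemma q0_pos: "0 < x \<Longrightarrow> x < 1 \<Longrightarrow> q0 x > 0"
  unfolding q0_def using ell_pos[of x] by simp

lemma rho_pos: "0 < x \<Longrightarrow> x < 1 \<Longrightarrow> \<rho> x > 0"
  unfolding \<rho>_def using ell_pos[of x] by simp

lemma ev01: "\<forall>\<^sub>F x in at_right 0. 0 < x \<and> x < (1::real)"
  using eventually_at_right_real[of 0 1] by simp

lemma g_equiv: "g \<sim>[at_right 0] (\<lambda>x. a * q0 x)"
proof (rule smallo_imp_asymp_equiv)
  have "(\<lambda>x. - (f x - (x - a * x powr \<alpha> * ell x powr of_int m))) \<in> o[at_right 0](\<lambda>x. a * q0 x)"
    using hf a_pos unfolding q0_def by (simp only: landau_o.small.uminus_in_iff landau_o.small.cmult)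
  then show "(\<lambda>x. g x - a * q0 x) \<in> o[at_right 0](\<lambda>x. a * q0 x)"
    unfolding g_def q0_def by (simp add: algebra_simps)
qed

lemma xi_equiv: "\<xi> \<sim>[at_right 0] (\<lambda>x. - a * q0 x)"
  using xi_eq unfolding q0_def by (simp add: mult.assoc)

lemma g_equiv_xi: "g \<sim>[at_right 0] (\<lambda>x. - \<xi> x)"
proof -
  have "(\<lambda>x. - \<xi> x) \<sim>[at_right 0] (\<lambda>x. a * q0 x)"
    using asymp_equiv_uminus[OF xi_equiv] by simp
  then show ?thesis using g_equiv asymp_equiv_trans asymp_equiv_sym by metis
qed

lemma ev_xi_neg: "\<forall>\<^sub>F x in at_right 0. \<xi> x < 0"
  using asymp_equiv_eventually_neg_iff[OF xi_equiv] ev01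
  by eventually_elim (use a_pos q0_pos in auto)

lemma ev_dxi_neg: "\<forall>\<^sub>F x in at_right 0. deriv \<xi> x < 0"
  using asymp_equiv_eventually_neg_iff[OF dxi_eq] ev01
proof eventually_elim
  case (elim x)
  then have "ell x > 0" by (intro ell_pos) auto
  then have "0 < a * \<alpha> * x powr (\<alpha> - 1) * ell x powr real_of_int m"
    using a_pos alpha_gt elim by simp
  with elim show ?case by simp
qed

lemma ev_g_pos: "\<forall>\<^sub>F x in at_right 0. g x > 0"
  using asymp_equiv_eventually_pos_iff[OF g_equiv] ev01
  by eventually_elim (use a_pos q0_pos in auto)

lemma ev_g_le: "\<forall>\<^sub>F x in at_right 0. g x \<le> 2 * \<bar>\<xi> x\<bar>"
  using asymp_equiv_imp_eventually_le[OF g_equiv_xi, of 2, simplified] ev_g_pos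
  by eventually_elim auto

lemma q0_over_x: "((\<lambda>x. q0 x / x) \<longlongrightarrow> 0) (at_right 0)"
  unfolding q0_def ell_def using alpha_gt by real_asymp

lemma g_over_x: "((\<lambda>x. g x / x) \<longlongrightarrow> 0) (at_right 0)"
proof -
  have "((\<lambda>x. g x / (a * q0 x)) \<longlongrightarrow> 1) (at_right 0)"
    by (rule asymp_equivD_strong[OF g_equiv]) (use ev01 in eventually_elim, use a_pos q0_pos in force)
  then have "((\<lambda>x. g x / (a * q0 x) * (a * (q0 x / x))) \<longlongrightarrow> 1 * (a * 0)) (at_right 0)"
    by (intro tendsto_intros q0_over_x)
  then have "((\<lambda>x. g x / (a * q0 x) * (a * (q0 x / x))) \<longlongrightarrow> 0) (at_right 0)" by simp
  moreover have "\<forall>\<^sub>F x in at_right 0. g x / (a * q0 x) * (a * (q0 x / x)) = g x / x"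
    using ev01 proof eventually_elim
    case (elim x) with q0_pos[of x] a_pos show ?case by (simp add: field_simps)
  qed
  ultimately show ?thesis by (rule Lim_transform_eventually)
qed

lemma f_over_x: "((\<lambda>x. f x / x) \<longlongrightarrow> 1) (at_right 0)"
proof -
  have "((\<lambda>x. 1 - g x / x) \<longlongrightarrow> 1) (at_right 0)"
    using tendsto_diff[OF tendsto_const g_over_x, of 1] by simp
  moreover have "\<forall>\<^sub>F x in at_right 0. 1 - g x / x = f x / x"
    using ev01 by eventually_elim (auto simp: g_def field_simps)
  ultimately show ?thesis by (rule Lim_transform_eventually)
qed


lemma f_analytic: "\<exists>d1>0. real_analytic_on f {0<..<d1}"
  using pdg unfolding parabolic_dulac_germ_def dulac_germ_exp_def by blast

lemma xi_DERIV: "x \<in> {0<..<d} \<Longrightarrow> (\<xi> has_real_derivative deriv \<xi> x) (at x)"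
  using analytic_DERIV[OF xi_an] .

lemma psi_inj: assumes "x \<in> {0<..<d}" "y \<in> {0<..<d}" "\<Psi> x = \<Psi> y" shows "x = y"
proof (rule ccontr)
  assume ne: "x \<noteq> y"
  have *: "\<exists>z. min x y < z \<and> z < max x y \<and> (\<Psi> has_real_derivative 0) (at z)"
  proof (rule Rolle)
    show "min x y < max x y" using ne by auto
    show "\<Psi> (min x y) = \<Psi> (max x y)" using assms by (auto simp: min_def max_def)
    show "continuous_on {min x y..max x y} \<Psi>"
      using psi assms by (intro continuous_at_imp_continuous_on ballI DERIV_isCont)
        (auto simp: min_def max_def split: if_splits)
    show "\<And>z. min x y < z \<Longrightarrow> z < max x y \<Longrightarrow> \<Psi> differentiable at z"
      using psi assms by (auto simp: real_differentiable_def min_def max_def split: if_splits)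
  qed
  then obtain z where z: "min x y < z" "z < max x y" "(\<Psi> has_real_derivative 0) (at z)" by blast
  have "z \<in> {0<..<d}" using z assms by (auto simp: min_def max_def split: if_splits)
  with psi have "(\<Psi> has_real_derivative 1 / \<xi> z) (at z)" "\<xi> z \<noteq> 0" by auto
  with z(3) DERIV_unique show False by fastforce
qed

lemma good_exists: "\<exists>\<delta>0>0. \<delta>0 \<le> d \<and> \<delta>0 \<le> 1 \<and> (\<forall>x\<in>{0<..<\<delta>0}. \<xi> x < 0 \<and> deriv \<xi> x < 0 \<and> g x > 0 \<and>
   (f has_real_derivative deriv f x) (at x))"
proof -
  obtain d1 where d1: "d1 > 0" "real_analytic_on f {0<..<d1}" using f_analytic by blast
  have "\<forall>\<^sub>F x in at_right 0. \<xi> x < 0 \<and> deriv \<xi> x < 0 \<and> g x > 0"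
    using ev_xi_neg ev_dxi_neg ev_g_pos by eventually_elim auto
  then obtain b where b: "b > 0" "\<forall>y>0. y < b \<longrightarrow> \<xi> y < 0 \<and> deriv \<xi> y < 0 \<and> g y > 0"
    unfolding eventually_at_right_field by auto
  define \<delta>0 where "\<delta>0 = min (min b d1) (min d 1)"
  have "\<delta>0 > 0" using b d1 d_pos by (simp add: \<delta>0_def)
  moreover have "\<forall>x\<in>{0<..<\<delta>0}. \<xi> x < 0 \<and> deriv \<xi> x < 0 \<and> g x > 0 \<and>
      (f has_real_derivative deriv f x) (at x)"
    using b analytic_DERIV[OF d1(2)] by (auto simp: \<delta>0_def)
  moreover have "\<delta>0 \<le> d" "\<delta>0 \<le> 1" by (auto simp: \<delta>0_def)
  ultimately show ?thesis by blast
qed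

end

locale dulac_good = dulac_setup +
  fixes \<delta>0 :: real
  assumes d0_pos: "\<delta>0 > 0" and d0_le: "\<delta>0 \<le> d" "\<delta>0 \<le> 1"
    and d0_good: "\<forall>x\<in>{0<..<\<delta>0}. \<xi> x < 0 \<and> deriv \<xi> x < 0 \<and> g x > 0 \<and>
       (f has_real_derivative deriv f x) (at x)"
begin

lemma inD: "x \<in> {0<..<\<delta>0} \<Longrightarrow> x \<in> {0<..<d}" using d0_le by auto

lemma xi_neg: "x \<in> {0<..<\<delta>0} \<Longrightarrow> \<xi> x < 0" using d0_good by auto
lemma dxi_neg: "x \<in> {0<..<\<delta>0} \<Longrightarrow> deriv \<xi> x < 0" using d0_good by auto
lemma g_pos: "x \<in> {0<..<\<delta>0} \<Longrightarrow> g x > 0" using d0_good by auto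
lemma f_DERIV: "x \<in> {0<..<\<delta>0} \<Longrightarrow> (f has_real_derivative deriv f x) (at x)" using d0_good by auto

lemma f_in: "x \<in> {0<..<\<delta>0} \<Longrightarrow> f x \<in> {0<..<\<delta>0} \<and> f x < x"
  using g_pos[of x] fpsi inD[of x] by (auto simp: g_def)

lemma psi_DERIV: "x \<in> {0<..<\<delta>0} \<Longrightarrow> (\<Psi> has_real_derivative 1 / \<xi> x) (at x)"
  using psi inD by auto

lemma psi_decr: assumes "x \<in> {0<..<\<delta>0}" "y \<in> {0<..<\<delta>0}" "x < y" shows "\<Psi> y < \<Psi> x"
proof (rule DERIV_neg_imp_decreasing[OF assms(3)])
  fix z assume "x \<le> z" "z \<le> y"
  then have z: "z \<in> {0<..<\<delta>0}" using assms by auto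
  show "\<exists>y. (\<Psi> has_real_derivative y) (at z) \<and> y < 0"
    using psi_DERIV[OF z] xi_neg[OF z] by (auto intro!: exI[of _ "1 / \<xi> z"])
qed

lemma psi_le_iff: "x \<in> {0<..<\<delta>0} \<Longrightarrow> y \<in> {0<..<\<delta>0} \<Longrightarrow> \<Psi> x \<le> \<Psi> y \<longleftrightarrow> y \<le> x"
  using psi_decr[of x y] psi_decr[of y x] by (cases x y rule: linorder_cases) auto

lemma xi_decr: assumes "x \<in> {0<..<\<delta>0}" "y \<in> {0<..<\<delta>0}" "x < y" shows "\<xi> y < \<xi> x"
proof (rule DERIV_neg_imp_decreasing[OF assms(3)])
  fix z assume "x \<le> z" "z \<le> y"
  then have z: "z \<in> {0<..<\<delta>0}" using assms by auto
  show "\<exists>y. (\<xi> has_real_derivative y) (at z) \<and> y < 0"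
    using xi_DERIV[OF inD[OF z]] dxi_neg[OF z] by blast
qed

lemma g_DERIV: assumes x: "x \<in> {0<..<\<delta>0}"
  shows "\<exists>D. (g has_real_derivative D) (at x) \<and> D > 0"
proof -
  have fx: "f x \<in> {0<..<\<delta>0}" "f x < x" using f_in[OF x] by auto
  have d1: "((\<lambda>y. \<Psi> (f y)) has_real_derivative 1 / \<xi> (f x) * deriv f x) (at x)"
    using DERIV_chain2[OF psi_DERIV[OF fx(1)] f_DERIV[OF x]] by simp
  have "((\<lambda>y. \<Psi> y + 1) has_real_derivative 1 / \<xi> x) (at x)"
    using psi_DERIV[OF x] by (auto intro!: derivative_eq_intros)
  then have d2: "((\<lambda>y. \<Psi> (f y)) has_real_derivative 1 / \<xi> x) (at x)"
    by (rule has_field_derivative_transform_within_open[where S = "{0<..<d}"])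
       (use x inD fpsi in auto)
  have eq: "1 / \<xi> (f x) * deriv f x = 1 / \<xi> x" using DERIV_unique[OF d1 d2] .
  have xn: "\<xi> x < 0" "\<xi> (f x) < 0" using xi_neg x fx by auto
  have "\<xi> x < \<xi> (f x)" using xi_decr[OF fx(1) x fx(2)] .
  have df: "deriv f x = \<xi> (f x) / \<xi> x" using eq xn by (simp add: field_simps)
  have "deriv f x < 1" unfolding df using xn \<open>\<xi> x < \<xi> (f x)\<close> by (simp add: divide_less_eq)
  moreover have "(g has_real_derivative 1 - deriv f x) (at x)"
    unfolding g_def[abs_def] using f_DERIV[OF x] by (auto intro!: derivative_eq_intros)
  ultimately show ?thesis by auto
qed

lemma g_mono: assumes "x \<in> {0<..<\<delta>0}" "y \<in> {0<..<\<delta>0}" "x < y" shows "g x < g y"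
proof (rule DERIV_pos_imp_increasing[OF assms(3)])
  fix z assume "x \<le> z" "z \<le> y"
  then have z: "z \<in> {0<..<\<delta>0}" using assms by auto
  show "\<exists>y. (g has_real_derivative y) (at z) \<and> y > 0" using g_DERIV[OF z] .
qed

lemma g_le_iff: "x \<in> {0<..<\<delta>0} \<Longrightarrow> y \<in> {0<..<\<delta>0} \<Longrightarrow> g x \<le> g y \<longleftrightarrow> x \<le> y"
  using g_mono[of x y] g_mono[of y x] by (cases x y rule: linorder_cases) auto

lemma g_cont: "x \<in> {0<..<\<delta>0} \<Longrightarrow> isCont g x"
  using g_DERIV DERIV_isCont by blast

lemma psi_cont: "x \<in> {0<..<\<delta>0} \<Longrightarrow> isCont \<Psi> x"
  using psi_DERIV DERIV_isCont by blast

end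



lemma alg1:
  fixes A B Xw X2 D1 h G \<eta> :: real
  assumes A: "A < 0" and B: "B < 0" and eta: "0 \<le> \<eta>" "\<eta> \<le> 1/2"
    and u: "\<bar>X2 / A - 1\<bar> \<le> \<eta>" and v: "\<bar>D1 / B - 1\<bar> \<le> \<eta>" and w: "\<bar>Xw / A - 1\<bar> \<le> \<eta>"
    and h: "0 \<le> h" "h \<le> G" and G: "G \<le> 2 * \<bar>A\<bar>"
  shows "\<bar>(- h * D1 + h / X2 * (A * B)) / Xw\<bar> \<le> 12 * \<eta> * \<bar>B\<bar>"
proof -
  define uu where "uu = X2 / A - 1"
  define vv where "vv = D1 / B - 1"
  have X2: "X2 = A * (1 + uu)" using A by (simp add: uu_def field_simps)
  have D1: "D1 = B * (1 + vv)" using B by (simp add: vv_def field_simps)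
  have uu1: "\<bar>uu\<bar> \<le> \<eta>" using u by (simp add: uu_def)
  have uu: "\<bar>uu\<bar> \<le> \<eta>" "1 + uu \<ge> 1/2" using uu1 eta by arith+
  have vv: "\<bar>vv\<bar> \<le> \<eta>" using v by (simp add: vv_def)
  have num: "- h * D1 + h / X2 * (A * B) = h * B * (- uu / (1 + uu) - vv)"
  proof -
    have "1 + uu > 0" "A \<noteq> 0" using uu(2) A by auto
    moreover have "A + A * uu \<noteq> 0" using calculation by (metis distrib_left mult_1_right mult_eq_0_iff less_irrefl)
    ultimately show ?thesis unfolding X2 D1 by (simp add: field_simps)
  qed
  have "\<bar>uu / (1 + uu)\<bar> \<le> 2 * \<eta>"
  proof -
    have "\<bar>uu / (1 + uu)\<bar> = \<bar>uu\<bar> / (1 + uu)" using uu(2) by (simp add: abs_div)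
    also have "\<dots> \<le> \<bar>uu\<bar> / (1/2)" using uu(2) by (intro divide_left_mono) auto
    also have "\<dots> \<le> 2 * \<eta>" using uu(1) by simp
    finally show ?thesis .
  qed
  then have b1: "\<bar>- uu / (1 + uu) - vv\<bar> \<le> 3 * \<eta>" using vv by linarith
  have xw: "\<bar>Xw\<bar> \<ge> \<bar>A\<bar> / 2"
  proof -
    have "Xw / A \<ge> 1/2" using w eta by linarith
    then have "Xw \<le> A / 2" using A by (simp add: le_divide_eq)
    then show ?thesis using A by linarith
  qed
  have Apos: "\<bar>A\<bar> > 0" using A by simp
  have "\<bar>(- h * D1 + h / X2 * (A * B)) / Xw\<bar> = h * \<bar>B\<bar> * \<bar>- uu / (1 + uu) - vv\<bar> / \<bar>Xw\<bar>"
    unfolding num using h by (simp add: abs_mult abs_div)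
  also have "\<dots> \<le> h * \<bar>B\<bar> * (3 * \<eta>) / (\<bar>A\<bar> / 2)"
    using h b1 xw Apos by (intro frac_le mult_left_mono mult_nonneg_nonneg) auto
  also have "\<dots> = 6 * \<eta> * \<bar>B\<bar> * (h / \<bar>A\<bar>)" using Apos by (simp add: field_simps)
  also have "\<dots> \<le> 6 * \<eta> * \<bar>B\<bar> * 2"
  proof -
    have "h / \<bar>A\<bar> \<le> 2" using h G Apos by (simp add: divide_le_eq)
    then show ?thesis using eta by (intro mult_left_mono) auto
  qed
  finally show ?thesis by simp
qed

context dulac_good begin

lemma W_pos: "y \<in> {0<..<\<delta>0} \<Longrightarrow> W y > 0"
  unfolding W_def using xi_neg dxi_neg by (simp add: mult_neg_neg)

lemma pointwise_est:
  assumes y: "y \<in> {0<..<\<delta>0}" and eta: "0 \<le> \<eta>" "\<eta> \<le> 1/2"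
    and hu: "\<forall>\<theta>\<in>{f y..y}. \<bar>\<xi> \<theta> / \<xi> y - 1\<bar> \<le> \<eta>"
    and hv: "\<forall>\<theta>\<in>{f y..y}. \<bar>deriv \<xi> \<theta> / deriv \<xi> y - 1\<bar> \<le> \<eta>"
    and hg: "g y \<le> 2 * \<bar>\<xi> y\<bar>" and z: "z \<in> {f y..y}"
  shows "\<bar>z - y - (\<Psi> z - \<Psi> y) * \<xi> y - (\<Psi> z - \<Psi> y)\<^sup>2 * W y / 2\<bar> \<le> 24 * \<eta> * W y"
proof (cases "z = y")
  case True then show ?thesis using W_pos[OF y] eta by simp
next
  case False
  have fy: "f y \<in> {0<..<\<delta>0}" "f y < y" using f_in[OF y] by auto
  have zy: "z < y" "f y \<le> z" using z False by auto
  have inI: "w \<in> {0<..<\<delta>0}" if "f y \<le> w" "w \<le> y" for w using that fy y by auto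
  define E where "E w = w - y - (\<Psi> w - \<Psi> y) * \<xi> y - (\<Psi> w - \<Psi> y)\<^sup>2 * W y / 2" for w
  define E' where "E' w = (\<xi> w - \<xi> y - (\<Psi> w - \<Psi> y) * W y) / \<xi> w" for w
  have dE: "(E has_real_derivative E' w) (at w)" if "w \<in> {0<..<\<delta>0}" for w
  proof -
    have "\<xi> w \<noteq> 0" using xi_neg[OF that] by simp
    then show ?thesis unfolding E_def[abs_def] E'_def
      by (auto intro!: derivative_eq_intros psi_DERIV[OF that] simp: power2_eq_square field_simps)
  qed
  obtain w0 where w0: "z < w0" "w0 < y" "E y - E z = (y - z) * E' w0"
    using MVT2[OF zy(1), of E E'] dE inI zy by force
  have w0in: "w0 \<in> {0<..<\<delta>0}" using inI[of w0] w0 zy by auto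
  obtain t2 where t2: "w0 < t2" "t2 < y" "\<Psi> y - \<Psi> w0 = (y - w0) * (1 / \<xi> t2)"
    using MVT2[OF w0(2), of \<Psi> "\<lambda>x. 1 / \<xi> x"] psi_DERIV inI w0 zy by force
  obtain t1 where t1: "w0 < t1" "t1 < y" "\<xi> y - \<xi> w0 = (y - w0) * deriv \<xi> t1"
    using MVT2[OF w0(2), of \<xi> "deriv \<xi>"] xi_DERIV inI inD w0 zy by force
  have "\<xi> w0 - \<xi> y - (\<Psi> w0 - \<Psi> y) * W y = - (y - w0) * deriv \<xi> t1 + (y - w0) / \<xi> t2 * (\<xi> y * deriv \<xi> y)"
    using t1(3) t2(3) unfolding W_def by (simp add: field_simps)
  then have E'eq: "E' w0 = (- (y - w0) * deriv \<xi> t1 + (y - w0) / \<xi> t2 * (\<xi> y * deriv \<xi> y)) / \<xi> w0"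
    unfolding E'_def by simp
  have bE': "\<bar>E' w0\<bar> \<le> 12 * \<eta> * \<bar>deriv \<xi> y\<bar>"
    unfolding E'eq
  proof (rule alg1[where G = "g y"])
    show "\<xi> y < 0" "deriv \<xi> y < 0" using xi_neg[OF y] dxi_neg[OF y] .
    show "\<bar>\<xi> t2 / \<xi> y - 1\<bar> \<le> \<eta>" using hu t2 w0 zy by auto
    show "\<bar>deriv \<xi> t1 / deriv \<xi> y - 1\<bar> \<le> \<eta>" using hv t1 w0 zy by auto
    show "\<bar>\<xi> w0 / \<xi> y - 1\<bar> \<le> \<eta>" using hu w0 zy by auto
    show "y - w0 \<le> g y" using w0 zy unfolding g_def by auto
  qed (use eta hg w0 in auto)
  have "E y = 0" by (simp add: E_def)
  then have "E z = - ((y - z) * E' w0)" using w0(3) by simp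
  then have "\<bar>E z\<bar> = (y - z) * \<bar>E' w0\<bar>" using zy by (simp add: abs_mult)
  also have "\<dots> \<le> (y - z) * (12 * \<eta> * \<bar>deriv \<xi> y\<bar>)"
    using bE' zy by (intro mult_left_mono) auto
  also have "\<dots> \<le> (2 * \<bar>\<xi> y\<bar>) * (12 * \<eta> * \<bar>deriv \<xi> y\<bar>)"
  proof -
    have "y - z \<le> g y" using zy unfolding g_def by auto
    then show ?thesis using hg eta by (intro mult_right_mono) auto
  qed
  also have "\<dots> = 24 * \<eta> * W y"
    using xi_neg[OF y] dxi_neg[OF y] unfolding W_def by (simp add: abs_mult)
  finally show ?thesis unfolding E_def .
qed

end



context dulac_setup begin

lemma W_equiv: "W \<sim>[at_right 0] (\<lambda>x. a\<^sup>2 * \<alpha> * \<rho> x)"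
proof -
  have A: "(\<lambda>x. \<xi> x * deriv \<xi> x) \<sim>[at_right 0]
      (\<lambda>x. (- a * x powr \<alpha> * ell x powr of_int m) * (- a * \<alpha> * x powr (\<alpha> - 1) * ell x powr of_int m))"
    by (rule asymp_equiv_mult[OF xi_eq dxi_eq])
  have B: "\<forall>\<^sub>F x in at_right 0. (- a * x powr \<alpha> * ell x powr of_int m) * (- a * \<alpha> * x powr (\<alpha> - 1) * ell x powr of_int m)
      = a\<^sup>2 * \<alpha> * \<rho> x"
    using ev01 proof eventually_elim
    case (elim x)
    have "x powr \<alpha> * x powr (\<alpha> - 1) = x powr (2 * \<alpha> - 1)" by (simp add: powr_add[symmetric])
    moreover have "ell x powr of_int m * ell x powr of_int m = ell x powr of_int (2 * m)"
      by (simp add: powr_add[symmetric])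
    ultimately show ?case unfolding \<rho>_def power2_eq_square
      by (simp add: algebra_simps)
  qed
  show ?thesis unfolding W_def[abs_def]
    by (rule asymp_equiv_transfer[OF A _ B]) simp
qed

lemma ev_W_ge: "\<forall>\<^sub>F x in at_right 0. W x \<ge> a\<^sup>2 * \<alpha> / 2 * \<rho> x"
  using asymp_equiv_imp_eventually_ge[OF W_equiv, of "1/2", simplified] ev01 ev_xi_neg ev_dxi_neg
proof eventually_elim
  case (elim x)
  have "W x > 0" unfolding W_def using elim by (simp add: mult_neg_neg)
  moreover have "\<rho> x > 0" using rho_pos elim by auto
  ultimately show ?case using elim a_pos alpha_gt by (simp add: abs_mult)
qed

lemma ev_r_small: assumes "e > 0"
  shows "\<forall>\<^sub>F x in at_right 0. \<bar>\<xi> x + g x + W x / 2\<bar> \<le> e * W x"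
proof -
  have c: "e * (a\<^sup>2 * \<alpha> / 2) > 0" using assms a_pos alpha_gt by simp
  have "\<forall>\<^sub>F x in at_right 0. norm (\<xi> x + (x - f x) + \<xi> x * deriv \<xi> x / 2) \<le> e * (a\<^sup>2 * \<alpha> / 2) * norm (\<rho> x)"
    using landau_o.smallD[OF hW c] unfolding \<rho>_def .
  then show ?thesis using ev_W_ge ev01
  proof eventually_elim
    case (elim x)
    have "\<rho> x > 0" using rho_pos elim by auto
    then have "\<bar>\<xi> x + g x + W x / 2\<bar> \<le> e * ((a\<^sup>2 * \<alpha> / 2) * \<rho> x)"
      using elim unfolding g_def W_def by (simp add: mult.assoc)
    also have "\<dots> \<le> e * W x" using elim assms by (intro mult_left_mono) auto
    finally show ?case .
  qed
qed

end

context dulac_good begin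

lemma ev_f_lo: "\<forall>\<^sub>F y in at_right 0. 0 < f y \<and> f y \<le> y"
  using eventually_at_right_real[OF d0_pos] by eventually_elim (use f_in in force)

lemma main_est:
  assumes eta: "\<eta> > 0"
  shows "\<exists>y1>0. y1 \<le> \<delta>0 \<and> (\<forall>y\<in>{0<..<y1}. \<forall>z\<in>{f y..y}.
     \<bar>y - z - g y * (\<Psi> z - \<Psi> y) - ((\<Psi> z - \<Psi> y) - (\<Psi> z - \<Psi> y)\<^sup>2) * W y / 2\<bar> \<le> \<eta> * W y)"
proof -
  define \<eta>1 where "\<eta>1 = min (1/2) (\<eta> / 48)"
  have e1: "\<eta>1 > 0" "\<eta>1 \<le> 1/2" "24 * \<eta>1 \<le> \<eta> / 2" using eta by (auto simp: \<eta>1_def)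
  have xi_eq': "\<xi> \<sim>[at_right 0] (\<lambda>x. (- a) * x powr \<alpha> * ell x powr of_int m)" using xi_eq by simp
  have dxi_eq': "deriv \<xi> \<sim>[at_right 0] (\<lambda>x. (- a * \<alpha>) * x powr (\<alpha> - 1) * ell x powr of_int m)"
    using dxi_eq by simp
  have u: "\<forall>\<^sub>F y in at_right 0. \<forall>\<theta>\<in>{f y..y}. \<bar>\<xi> \<theta> / \<xi> y - 1\<bar> \<le> \<eta>1"
    by (rule ratio_uniform[OF xi_eq' _ f_over_x ev_f_lo e1(1)]) (use a_pos in simp)
  have v: "\<forall>\<^sub>F y in at_right 0. \<forall>\<theta>\<in>{f y..y}. \<bar>deriv \<xi> \<theta> / deriv \<xi> y - 1\<bar> \<le> \<eta>1"
    by (rule ratio_uniform[OF dxi_eq' _ f_over_x ev_f_lo e1(1)]) (use a_pos alpha_gt in simp)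
  have r: "\<forall>\<^sub>F y in at_right 0. \<bar>\<xi> y + g y + W y / 2\<bar> \<le> \<eta> / 2 * W y"
    using ev_r_small[of "\<eta> / 2"] eta by simp
  have "\<forall>\<^sub>F y in at_right 0. y < \<delta>0" using eventually_at_right_real[OF d0_pos] by eventually_elim auto
  then have "\<forall>\<^sub>F y in at_right 0. y < \<delta>0 \<and> (\<forall>\<theta>\<in>{f y..y}. \<bar>\<xi> \<theta> / \<xi> y - 1\<bar> \<le> \<eta>1) \<and>
      (\<forall>\<theta>\<in>{f y..y}. \<bar>deriv \<xi> \<theta> / deriv \<xi> y - 1\<bar> \<le> \<eta>1) \<and> \<bar>\<xi> y + g y + W y / 2\<bar> \<le> \<eta> / 2 * W y
      \<and> g y \<le> 2 * \<bar>\<xi> y\<bar>"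
    using u v r ev_g_le by eventually_elim auto
  then obtain b where b: "b > 0" "\<And>y. 0 < y \<Longrightarrow> y < b \<Longrightarrow> y < \<delta>0 \<and> (\<forall>\<theta>\<in>{f y..y}. \<bar>\<xi> \<theta> / \<xi> y - 1\<bar> \<le> \<eta>1) \<and>
      (\<forall>\<theta>\<in>{f y..y}. \<bar>deriv \<xi> \<theta> / deriv \<xi> y - 1\<bar> \<le> \<eta>1) \<and> \<bar>\<xi> y + g y + W y / 2\<bar> \<le> \<eta> / 2 * W y
      \<and> g y \<le> 2 * \<bar>\<xi> y\<bar>"
    unfolding eventually_at_right_field by auto
  define y1 where "y1 = min b \<delta>0"
  have "\<forall>y\<in>{0<..<y1}. \<forall>z\<in>{f y..y}.
     \<bar>y - z - g y * (\<Psi> z - \<Psi> y) - ((\<Psi> z - \<Psi> y) - (\<Psi> z - \<Psi> y)\<^sup>2) * W y / 2\<bar> \<le> \<eta> * W y"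
  proof (intro ballI)
    fix y z assume y: "y \<in> {0<..<y1}" and z: "z \<in> {f y..y}"
    have yb: "y \<in> {0<..<\<delta>0}" using y by (auto simp: y1_def)
    note byy = b(2)[of y]
    have bb: "y < \<delta>0 \<and> (\<forall>\<theta>\<in>{f y..y}. \<bar>\<xi> \<theta> / \<xi> y - 1\<bar> \<le> \<eta>1) \<and>
      (\<forall>\<theta>\<in>{f y..y}. \<bar>deriv \<xi> \<theta> / deriv \<xi> y - 1\<bar> \<le> \<eta>1) \<and> \<bar>\<xi> y + g y + W y / 2\<bar> \<le> \<eta> / 2 * W y
      \<and> g y \<le> 2 * \<bar>\<xi> y\<bar>" using byy y by (auto simp: y1_def)
    have E: "\<bar>z - y - (\<Psi> z - \<Psi> y) * \<xi> y - (\<Psi> z - \<Psi> y)\<^sup>2 * W y / 2\<bar> \<le> 24 * \<eta>1 * W y"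
      using pointwise_est[OF yb _ e1(2)] bb e1 z by auto
    have Wp: "W y > 0" using W_pos[OF yb] .
    have fy: "f y \<in> {0<..<\<delta>0}" using f_in[OF yb] by auto
    have zin: "z \<in> {0<..<\<delta>0}" using z fy yb by auto
    have t0: "\<Psi> z - \<Psi> y \<ge> 0" using psi_le_iff[OF yb zin] z by auto
    have t1: "\<Psi> z - \<Psi> y \<le> 1"
      using psi_le_iff[OF zin fy] z fpsi inD[OF yb] by auto
    define t where "t = \<Psi> z - \<Psi> y"
    define r where "r = \<xi> y + g y + W y / 2"
    have eq: "y - z - g y * t - (t - t\<^sup>2) * W y / 2 = - (z - y - t * \<xi> y - t\<^sup>2 * W y / 2) - t * r"
      unfolding r_def by (simp add: field_simps power2_eq_square)
    have "\<bar>t * r\<bar> \<le> \<eta> / 2 * W y"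
    proof -
      have "\<bar>t * r\<bar> = t * \<bar>r\<bar>" using t0 by (simp add: abs_mult t_def)
      also have "\<dots> \<le> 1 * \<bar>r\<bar>" using t1 by (intro mult_right_mono) (auto simp: t_def)
      finally show ?thesis using bb unfolding r_def by simp
    qed
    moreover have "24 * \<eta>1 * W y \<le> \<eta> / 2 * W y" using e1 Wp by (intro mult_right_mono) auto
    moreover have "\<bar>- (z - y - t * \<xi> y - t\<^sup>2 * W y / 2) - t * r\<bar> \<le>
        \<bar>z - y - t * \<xi> y - t\<^sup>2 * W y / 2\<bar> + \<bar>t * r\<bar>"
      by (metis abs_minus_cancel abs_triangle_ineq4)
    ultimately show "\<bar>y - z - g y * (\<Psi> z - \<Psi> y) - ((\<Psi> z - \<Psi> y) - (\<Psi> z - \<Psi> y)\<^sup>2) * W y / 2\<bar> \<le> \<eta> * W y"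
      using E unfolding eq[unfolded t_def] t_def by linarith
  qed
  moreover have "y1 > 0" "y1 \<le> \<delta>0" using b d0_pos by (auto simp: y1_def)
  ultimately show ?thesis by blast
qed

end



lemma powid:
  fixes e Y L Le \<alpha> m :: real
  assumes "e > 0" "Y > 0" "L > 0" "Le > 0" "\<alpha> > 0"
  shows "(e / (Y powr \<alpha> * L powr m)) powr (2 - 1/\<alpha>) * (Le / L) powr (m / \<alpha>)
       = (e powr (2 - 1/\<alpha>) * Le powr (m / \<alpha>)) / (Y powr (2 * \<alpha> - 1) * L powr (2 * m))"
proof -
  have a: "(Y powr \<alpha> * L powr m) powr (2 - 1/\<alpha>) = Y powr (2 * \<alpha> - 1) * L powr (m * (2 - 1/\<alpha>))"
  proof -
    have e: "\<alpha> * (2 - 1/\<alpha>) = 2 * \<alpha> - 1" using assms by (simp add: field_simps)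
    show ?thesis using assms by (simp add: powr_mult powr_powr e)
  qed
  have b: "L powr (m * (2 - 1/\<alpha>)) * L powr (m / \<alpha>) = L powr (2 * m)"
    using assms by (simp add: powr_add[symmetric] field_simps)
  define P1 where "P1 = e powr (2 - 1/\<alpha>)"
  define P2 where "P2 = Le powr (m / \<alpha>)"
  define P3 where "P3 = L powr (m / \<alpha>)"
  define P4 where "P4 = L powr (m * (2 - 1/\<alpha>))"
  define P5 where "P5 = Y powr (2 * \<alpha> - 1)"
  have pos: "P3 > 0" "P4 > 0" "P5 > 0" using assms by (auto simp: P3_def P4_def P5_def)
  have "(e / (Y powr \<alpha> * L powr m)) powr (2 - 1/\<alpha>) * (Le / L) powr (m / \<alpha>) = P1 / (P5 * P4) * (P2 / P3)"
    using assms unfolding P1_def P2_def P3_def P4_def P5_def by (simp add: powr_divide a)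
  also have "\<dots> = P1 * P2 / (P5 * (P4 * P3))" using pos by (simp add: field_simps)
  also have "\<dots> = (e powr (2 - 1/\<alpha>) * Le powr (m / \<alpha>)) / (Y powr (2 * \<alpha> - 1) * L powr (2 * m))"
    unfolding P1_def P2_def P3_def P4_def P5_def b ..
  finally show ?thesis .
qed

lemma lnell_over_ln: "((\<lambda>y. ln (ell y) / ln y) \<longlongrightarrow> 0) (at_right 0)"
proof -
  have "((\<lambda>x::real. ln (ell (inverse x)) / ln (inverse x)) \<longlongrightarrow> 0) at_top"
    unfolding ell_def by real_asymp
  then show ?thesis unfolding at_right_to_top filterlim_filtermap .
qed

definition den :: "real \<Rightarrow> int \<Rightarrow> real \<Rightarrow> real" where
  "den \<alpha> m e = e powr (2 - 1 / \<alpha>) * ell e powr (of_int m / \<alpha>)"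

context dulac_setup begin

lemma ev_g_lt1: "\<forall>\<^sub>F y in at_right 0. 0 < g y / 2 \<and> g y / 2 < 1"
  using ev_g_pos ev01 eventually_at_right_real[OF d_pos]
proof eventually_elim
  case (elim y)
  then have "f y > 0" using fpsi by auto
  then show ?case using elim by (auto simp: g_def)
qed

lemma theta_lim: "\<exists>L>0. ((\<lambda>y. W y / den \<alpha> m (g y / 2)) \<longlongrightarrow> L) (at_right 0)"
proof -
  have apos: "a / 2 > 0" using a_pos by simp
  have gq: "((\<lambda>y. g y / (a * q0 y)) \<longlongrightarrow> 1) (at_right 0)"
    by (rule asymp_equivD_strong[OF g_equiv]) (use ev01 in eventually_elim, use a_pos q0_pos in force)
  have h1: "((\<lambda>y. (g y / 2) / q0 y) \<longlongrightarrow> a / 2) (at_right 0)"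
  proof -
    have "((\<lambda>y. g y / (a * q0 y) * (a / 2)) \<longlongrightarrow> 1 * (a / 2)) (at_right 0)"
      by (intro tendsto_mult gq tendsto_const)
    moreover have "\<forall>\<^sub>F y in at_right 0. g y / (a * q0 y) * (a / 2) = (g y / 2) / q0 y"
      using a_pos by (intro always_eventually) simp
    ultimately show ?thesis by (simp add: Lim_transform_eventually)
  qed
  have lny: "filterlim (\<lambda>y. ln y) at_infinity (at_right (0::real))"
    using filterlim_at_bot_imp_at_infinity[OF ln_at_0] .
  have h2: "((\<lambda>y. ln (g y / 2) / ln y) \<longlongrightarrow> \<alpha>) (at_right 0)"
  proof -
    have n: "((\<lambda>y. ln ((g y / 2) / q0 y)) \<longlongrightarrow> ln (a / 2)) (at_right 0)"
      using tendsto_ln[OF h1] apos by simp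
    have "((\<lambda>y. ln ((g y / 2) / q0 y) / ln y + \<alpha> + of_int m * (ln (ell y) / ln y)) \<longlongrightarrow> 0 + \<alpha> + of_int m * 0) (at_right 0)"
      by (intro tendsto_add tendsto_mult tendsto_const lnell_over_ln tendsto_divide_0[OF n lny])
    moreover have "\<forall>\<^sub>F y in at_right 0. ln ((g y / 2) / q0 y) / ln y + \<alpha> + of_int m * (ln (ell y) / ln y)
         = ln (g y / 2) / ln y"
      using ev01 ev_g_lt1
    proof eventually_elim
      case (elim y)
      have q: "q0 y > 0" "ell y > 0" using q0_pos ell_pos elim by auto
      have "ln (q0 y) = \<alpha> * ln y + of_int m * ln (ell y)"
        using q elim unfolding q0_def by (simp add: ln_mult ln_powr)
      moreover have "ln ((g y / 2) / q0 y) = ln (g y / 2) - ln (q0 y)"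
        using q elim by (simp add: ln_div ln_mult)
      moreover have "ln y < 0" using elim by simp
      ultimately show ?case by (simp add: field_simps)
    qed
    ultimately show ?thesis by (simp add: Lim_transform_eventually)
  qed
  have h3: "((\<lambda>y. ell (g y / 2) / ell y) \<longlongrightarrow> inverse \<alpha>) (at_right 0)"
  proof -
    have "((\<lambda>y. inverse (ln (g y / 2) / ln y)) \<longlongrightarrow> inverse \<alpha>) (at_right 0)"
      by (rule tendsto_inverse[OF h2]) (use alpha_gt in simp)
    moreover have "\<forall>\<^sub>F y in at_right 0. inverse (ln (g y / 2) / ln y) = ell (g y / 2) / ell y"
      using ev01 ev_g_lt1
    proof eventually_elim
      case (elim y)
      have "ln y < 0" "ln (g y / 2) < 0" using elim by auto
      then show ?case unfolding ell_def by (simp add: field_simps)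
    qed
    ultimately show ?thesis by (simp add: Lim_transform_eventually)
  qed
  define L1 where "L1 = (a / 2) powr (2 - 1/\<alpha>) * (inverse \<alpha>) powr (of_int m / \<alpha>)"
  have L1: "L1 > 0" using apos alpha_gt by (simp add: L1_def)
  have h4: "((\<lambda>y. den \<alpha> m (g y / 2) / \<rho> y) \<longlongrightarrow> L1) (at_right 0)"
  proof -
    have "((\<lambda>y. ((g y / 2) / q0 y) powr (2 - 1/\<alpha>) * (ell (g y / 2) / ell y) powr (of_int m / \<alpha>)) \<longlongrightarrow> L1) (at_right 0)"
      unfolding L1_def by (intro tendsto_mult tendsto_powr h1 h3 tendsto_const) (use apos alpha_gt in auto)
    moreover have "\<forall>\<^sub>F y in at_right 0. ((g y / 2) / q0 y) powr (2 - 1/\<alpha>) * (ell (g y / 2) / ell y) powr (of_int m / \<alpha>)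
       = den \<alpha> m (g y / 2) / \<rho> y"
      using ev01 ev_g_lt1
    proof eventually_elim
      case (elim y)
      have "ell y > 0" "ell (g y / 2) > 0" using ell_pos elim by auto
      then show ?case using powid[of "g y / 2" y "ell y" "ell (g y / 2)" \<alpha> "of_int m"] elim alpha_gt
        unfolding q0_def den_def \<rho>_def by simp
    qed
    ultimately show ?thesis by (simp add: Lim_transform_eventually)
  qed
  have h5: "((\<lambda>y. W y / \<rho> y) \<longlongrightarrow> a\<^sup>2 * \<alpha>) (at_right 0)"
  proof -
    have "((\<lambda>y. W y / (a\<^sup>2 * \<alpha> * \<rho> y)) \<longlongrightarrow> 1) (at_right 0)"
      by (rule asymp_equivD_strong[OF W_equiv]) (use ev01 in eventually_elim, use a_pos alpha_gt rho_pos in force)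
    then have "((\<lambda>y. W y / (a\<^sup>2 * \<alpha> * \<rho> y) * (a\<^sup>2 * \<alpha>)) \<longlongrightarrow> 1 * (a\<^sup>2 * \<alpha>)) (at_right 0)"
      by (intro tendsto_mult tendsto_const)
    moreover have "\<forall>\<^sub>F y in at_right 0. W y / (a\<^sup>2 * \<alpha> * \<rho> y) * (a\<^sup>2 * \<alpha>) = W y / \<rho> y"
      using a_pos alpha_gt by (intro always_eventually) simp
    ultimately show ?thesis by (simp add: Lim_transform_eventually)
  qed
  have "((\<lambda>y. (W y / \<rho> y) / (den \<alpha> m (g y / 2) / \<rho> y)) \<longlongrightarrow> a\<^sup>2 * \<alpha> / L1) (at_right 0)"
    by (intro tendsto_divide h4 h5) (use L1 in simp)
  moreover have "\<forall>\<^sub>F y in at_right 0. (W y / \<rho> y) / (den \<alpha> m (g y / 2) / \<rho> y) = W y / den \<alpha> m (g y / 2)"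
    using ev01
  proof eventually_elim
    case (elim y) then show ?case using rho_pos[of y] by simp
  qed
  ultimately have "((\<lambda>y. W y / den \<alpha> m (g y / 2)) \<longlongrightarrow> a\<^sup>2 * \<alpha> / L1) (at_right 0)"
    by (simp add: Lim_transform_eventually)
  moreover have "a\<^sup>2 * \<alpha> / L1 > 0" using a_pos alpha_gt L1 by simp
  ultimately show ?thesis by blast
qed

lemma den_pos: "0 < e \<Longrightarrow> e < 1 \<Longrightarrow> den \<alpha> m e > 0"
  unfolding den_def using ell_pos[of e] by simp

lemma theta_bounds: "\<exists>c1>0. \<exists>c2>0. \<forall>\<^sub>F y in at_right 0. c1 * den \<alpha> m (g y / 2) \<le> W y \<and> W y \<le> c2 * den \<alpha> m (g y / 2)"
proof -
  obtain L where L: "L > 0" "((\<lambda>y. W y / den \<alpha> m (g y / 2)) \<longlongrightarrow> L) (at_right 0)" using theta_lim by blast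
  have "\<forall>\<^sub>F y in at_right 0. dist (W y / den \<alpha> m (g y / 2)) L < L / 2"
    using L by (intro tendstoD) auto
  then have "\<forall>\<^sub>F y in at_right 0. L / 2 * den \<alpha> m (g y / 2) \<le> W y \<and> W y \<le> (3 * L / 2) * den \<alpha> m (g y / 2)"
    using ev_g_lt1
  proof eventually_elim
    case (elim y)
    have dp: "den \<alpha> m (g y / 2) > 0" using den_pos elim by auto
    have ab: "\<bar>W y / den \<alpha> m (g y / 2) - L\<bar> < L / 2" using elim by (simp add: dist_real_def)
    have "L / 2 \<le> W y / den \<alpha> m (g y / 2)" "W y / den \<alpha> m (g y / 2) \<le> 3 * L / 2"
      using ab[unfolded abs_less_iff] by linarith+
    then show ?case using dp by (simp add: field_simps)
  qed
  moreover have "L / 2 > 0" "3 * L / 2 > 0" using L by auto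
  ultimately show ?thesis by blast
qed

end



context dulac_good begin

lemma orb: assumes x0: "x0 \<in> {0<..<\<delta>0}"
  shows "(f ^^ n) x0 \<in> {0<..<\<delta>0} \<and> \<Psi> ((f ^^ n) x0) = \<Psi> x0 + real n"
proof (induction n)
  case 0 then show ?case using x0 by simp
next
  case (Suc n)
  then have "f ((f ^^ n) x0) \<in> {0<..<\<delta>0}" "\<Psi> (f ((f ^^ n) x0)) = \<Psi> ((f ^^ n) x0) + 1"
    using f_in fpsi inD by auto
  then show ?case using Suc by simp
qed

lemma orb_le_iff: assumes x0: "x0 \<in> {0<..<\<delta>0}"
  shows "(f ^^ n) x0 \<le> (f ^^ k) x0 \<longleftrightarrow> k \<le> n"
  using psi_le_iff[of "(f ^^ k) x0" "(f ^^ n) x0"] orb[OF x0, of n] orb[OF x0, of k] by auto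

lemma orb_to0: assumes x0: "x0 \<in> {0<..<\<delta>0}" and r: "r > 0"
  shows "\<exists>N. (f ^^ N) x0 < r"
proof (rule ccontr)
  assume "\<not> ?thesis"
  then have ge: "(f ^^ N) x0 \<ge> r" for N by (simp add: not_less)
  have r0: "r < \<delta>0" using ge[of 0] x0 by auto
  obtain N :: nat where N: "real N > \<Psi> r - \<Psi> x0" using reals_Archimedean2 by blast
  have "\<Psi> ((f ^^ N) x0) \<le> \<Psi> r"
    using psi_le_iff[of "(f ^^ N) x0" r] ge[of N] orb[OF x0, of N] r r0 by auto
  then show False using orb[OF x0, of N] N by simp
qed

lemma flow_eq: assumes x0: "x0 \<in> {0<..<\<delta>0}" and y: "y \<in> {0<..<\<delta>0}" and e: "\<Psi> y = \<Psi> x0 + t"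
  shows "flow \<Psi> d t x0 = y"
  unfolding flow_def
proof (rule the_equality)
  show "y \<in> {0<..<d} \<and> \<Psi> y = \<Psi> x0 + t" using y e inD by auto
  fix y' assume "y' \<in> {0<..<d} \<and> \<Psi> y' = \<Psi> x0 + t"
  then show "y' = y" using psi_inj[of y' y] y inD e by auto
qed

lemma flow_char: assumes x0: "x0 \<in> {0<..<\<delta>0}" and t: "t \<ge> 0"
  shows "flow \<Psi> d t x0 \<in> {0<..x0} \<and> \<Psi> (flow \<Psi> d t x0) = \<Psi> x0 + t \<and>
     flow \<Psi> d (t + 1) x0 = f (flow \<Psi> d t x0)"
proof -
  obtain N :: nat where N: "real N > t" using reals_Archimedean2 by blast
  let ?a = "(f ^^ N) x0"
  have a: "?a \<in> {0<..<\<delta>0}" "\<Psi> ?a = \<Psi> x0 + N" using orb[OF x0] by auto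
  have ax: "?a \<le> x0" using orb_le_iff[OF x0, of N 0] by simp
  have "\<exists>y. ?a \<le> y \<and> y \<le> x0 \<and> \<Psi> y = \<Psi> x0 + t"
  proof (rule IVT2')
    show "\<Psi> x0 \<le> \<Psi> x0 + t" "\<Psi> x0 + t \<le> \<Psi> ?a" using t N a by auto
    show "?a \<le> x0" by (rule ax)
    show "continuous_on {?a..x0} \<Psi>"
      using a x0 by (intro continuous_at_imp_continuous_on ballI psi_cont) auto
  qed
  then obtain y where y: "?a \<le> y" "y \<le> x0" "\<Psi> y = \<Psi> x0 + t" by blast
  have yin: "y \<in> {0<..<\<delta>0}" using y a x0 by auto
  have fl: "flow \<Psi> d t x0 = y" using flow_eq[OF x0 yin y(3)] .
  have "f y \<in> {0<..<\<delta>0}" "\<Psi> (f y) = \<Psi> x0 + (t + 1)" using f_in[OF yin] fpsi inD[OF yin] y(3) by auto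
  then have "flow \<Psi> d (t + 1) x0 = f y" using flow_eq[OF x0] by blast
  then show ?thesis using fl y yin by auto
qed

lemma key:
  assumes x0: "x0 \<in> {0<..<\<delta>0}" and e: "0 < \<epsilon>" "2 * \<epsilon> < g x0"
  shows "\<exists>y z. y \<in> {0<..<x0} \<and> g y = 2 * \<epsilon> \<and> z \<in> {f y..y} \<and> \<Psi> z - \<Psi> y < 1 \<and>
     cont_crit \<Psi> d x0 \<epsilon> = \<Psi> y - \<Psi> x0 \<and> real (disc_crit f x0 \<epsilon>) = \<Psi> z - \<Psi> x0 \<and>
     cont_length \<Psi> d x0 \<epsilon> - disc_length f x0 \<epsilon> = y - z - g y * (\<Psi> z - \<Psi> y)"
proof -
  obtain N where N: "(f ^^ N) x0 < 2 * \<epsilon>" using orb_to0[OF x0, of "2 * \<epsilon>"] e by auto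
  let ?a = "(f ^^ N) x0"
  have a: "?a \<in> {0<..<\<delta>0}" using orb[OF x0] by auto
  have ax: "?a \<le> x0" using orb_le_iff[OF x0, of N 0] by simp
  have "g ?a < ?a" using f_in[OF a] unfolding g_def by auto
  have "\<exists>y. ?a \<le> y \<and> y \<le> x0 \<and> g y = 2 * \<epsilon>"
  proof (rule IVT')
    show "g ?a \<le> 2 * \<epsilon>" using \<open>g ?a < ?a\<close> N by simp
    show "2 * \<epsilon> \<le> g x0" using e by simp
    show "?a \<le> x0" by (rule ax)
    show "continuous_on {?a..x0} g"
      using a x0 by (intro continuous_at_imp_continuous_on ballI g_cont) auto
  qed
  then obtain y where y: "?a \<le> y" "y \<le> x0" "g y = 2 * \<epsilon>" by blast
  have yin: "y \<in> {0<..<\<delta>0}" using y a x0 by auto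
  have yx: "y < x0" using y e by (cases "y = x0") auto
  define \<tau> where "\<tau> = \<Psi> y - \<Psi> x0"
  have tpos: "\<tau> > 0" using psi_decr[OF yin x0 yx] by (simp add: \<tau>_def)
  have fl: "flow \<Psi> d \<tau> x0 = y" using flow_eq[OF x0 yin] by (simp add: \<tau>_def)
  have fl1: "flow \<Psi> d (\<tau> + 1) x0 = f y" using flow_char[OF x0, of \<tau>] tpos fl by simp
  have cc: "cont_crit \<Psi> d x0 \<epsilon> = \<tau>"
    unfolding cont_crit_def
  proof (rule the_equality)
    show "0 \<le> \<tau> \<and> flow \<Psi> d \<tau> x0 - flow \<Psi> d (\<tau> + 1) x0 = 2 * \<epsilon>"
      using tpos fl fl1 y(3) by (simp add: g_def)
    fix t assume t: "0 \<le> t \<and> flow \<Psi> d t x0 - flow \<Psi> d (t + 1) x0 = 2 * \<epsilon>"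
    define y' where "y' = flow \<Psi> d t x0"
    have y': "y' \<in> {0<..x0}" "\<Psi> y' = \<Psi> x0 + t" "flow \<Psi> d (t + 1) x0 = f y'"
      using flow_char[OF x0, of t] t by (auto simp: y'_def)
    have y'in: "y' \<in> {0<..<\<delta>0}" using y' x0 by auto
    have "g y' = g y" using t y' y(3) by (simp add: g_def y'_def)
    then have "y' = y" using g_le_iff[OF y'in yin] g_le_iff[OF yin y'in] by auto
    then show "t = \<tau>" using y' by (simp add: \<tau>_def)
  qed
  define n where "n = nat \<lceil>\<tau>\<rceil>"
  have Pn: "\<And>k. (k \<ge> 1 \<and> (f ^^ k) x0 - (f ^^ Suc k) x0 \<le> 2 * \<epsilon> \<and> 2 * \<epsilon> < (f ^^ (k - 1)) x0 - (f ^^ k) x0)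
      \<longleftrightarrow> (k \<ge> 1 \<and> \<tau> \<le> real k \<and> real k - 1 < \<tau>)"
  proof -
    fix k :: nat
    have sk: "(f ^^ Suc k) x0 = f ((f ^^ k) x0)" for k by simp
    have ok: "(f ^^ k) x0 \<in> {0<..<\<delta>0}" "\<Psi> ((f ^^ k) x0) = \<Psi> x0 + real k" using orb[OF x0] by auto
    have A: "(f ^^ k) x0 - (f ^^ Suc k) x0 \<le> 2 * \<epsilon> \<longleftrightarrow> \<tau> \<le> real k"
    proof -
      have "(f ^^ k) x0 - (f ^^ Suc k) x0 \<le> 2 * \<epsilon> \<longleftrightarrow> g ((f ^^ k) x0) \<le> g y"
        using y(3) by (simp add: g_def)
      also have "\<dots> \<longleftrightarrow> (f ^^ k) x0 \<le> y" using g_le_iff[OF ok(1) yin] .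
      also have "\<dots> \<longleftrightarrow> \<Psi> y \<le> \<Psi> ((f ^^ k) x0)" using psi_le_iff[OF yin ok(1)] by simp
      also have "\<dots> \<longleftrightarrow> \<tau> \<le> real k" using ok by (auto simp: \<tau>_def)
      finally show ?thesis .
    qed
    have B: "k \<ge> 1 \<Longrightarrow> 2 * \<epsilon> < (f ^^ (k - 1)) x0 - (f ^^ k) x0 \<longleftrightarrow> real k - 1 < \<tau>"
    proof -
      assume k: "k \<ge> 1"
      then have kk: "k = Suc (k - 1)" by simp
      have ok': "(f ^^ (k - 1)) x0 \<in> {0<..<\<delta>0}" "\<Psi> ((f ^^ (k - 1)) x0) = \<Psi> x0 + real (k - 1)"
        using orb[OF x0] by auto
      have "2 * \<epsilon> < (f ^^ (k - 1)) x0 - (f ^^ k) x0 \<longleftrightarrow> \<not> g ((f ^^ (k - 1)) x0) \<le> g y"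
        using y(3) by (subst kk, subst (2) kk, simp only: sk) (auto simp: g_def)
      also have "\<dots> \<longleftrightarrow> \<not> (f ^^ (k - 1)) x0 \<le> y" using g_le_iff[OF ok'(1) yin] by simp
      also have "\<dots> \<longleftrightarrow> \<not> \<Psi> y \<le> \<Psi> ((f ^^ (k - 1)) x0)" using psi_le_iff[OF yin ok'(1)] by simp
      also have "\<dots> \<longleftrightarrow> real k - 1 < \<tau>" using ok' k by (auto simp: \<tau>_def of_nat_diff)
      finally show ?thesis .
    qed
    show "(k \<ge> 1 \<and> (f ^^ k) x0 - (f ^^ Suc k) x0 \<le> 2 * \<epsilon> \<and> 2 * \<epsilon> < (f ^^ (k - 1)) x0 - (f ^^ k) x0)
      \<longleftrightarrow> (k \<ge> 1 \<and> \<tau> \<le> real k \<and> real k - 1 < \<tau>)"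
      using A B by blast
  qed
  have nprop: "n \<ge> 1 \<and> \<tau> \<le> real n \<and> real n - 1 < \<tau>"
    using tpos ceiling_correct[of \<tau>] unfolding n_def by (auto simp: le_nat_iff)
  have dc: "disc_crit f x0 \<epsilon> = n"
    unfolding disc_crit_def
  proof (rule the_equality)
    show "n \<ge> 1 \<and> (f ^^ n) x0 - (f ^^ Suc n) x0 \<le> 2 * \<epsilon> \<and> 2 * \<epsilon> < (f ^^ (n - 1)) x0 - (f ^^ n) x0"
      using Pn[of n] nprop by blast
    fix k assume "k \<ge> 1 \<and> (f ^^ k) x0 - (f ^^ Suc k) x0 \<le> 2 * \<epsilon> \<and> 2 * \<epsilon> < (f ^^ (k - 1)) x0 - (f ^^ k) x0"
    then have k: "k \<ge> 1" "\<tau> \<le> real k" "real k - 1 < \<tau>" using Pn[of k] by auto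
    have "\<lceil>\<tau>\<rceil> = int k" by (rule ceiling_unique) (use k in auto)
    then show "k = n" unfolding n_def by simp
  qed
  define z where "z = (f ^^ n) x0"
  have zz: "z \<in> {0<..<\<delta>0}" "\<Psi> z = \<Psi> x0 + real n" using orb[OF x0] by (auto simp: z_def)
  have fy: "f y \<in> {0<..<\<delta>0}" "\<Psi> (f y) = \<Psi> y + 1" using f_in[OF yin] fpsi inD[OF yin] by auto
  have zy: "z \<le> y" using psi_le_iff[OF yin zz(1)] zz nprop by (simp add: \<tau>_def)
  have fyz: "f y \<le> z" using psi_le_iff[OF zz(1) fy(1)] zz nprop fy by (simp add: \<tau>_def)
  have "cont_length \<Psi> d x0 \<epsilon> - disc_length f x0 \<epsilon> = y - z - g y * (\<Psi> z - \<Psi> y)"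
    unfolding cont_length_def disc_length_def Let_def cc dc fl
    using zz y(3) by (simp add: z_def \<tau>_def algebra_simps)
  moreover have "real (disc_crit f x0 \<epsilon>) = \<Psi> z - \<Psi> x0" using dc zz by simp
  moreover have "\<Psi> z - \<Psi> y < 1" using zz nprop by (simp add: \<tau>_def)
  ultimately show ?thesis using yin yx y(3) zy fyz cc \<tau>_def
    by (intro exI[of _ y] exI[of _ z]) auto
qed

end



lemma seq_pick:
  assumes "eventually P (at_right (0::real))" "s \<longlonglongrightarrow> 0" "\<forall>n. s n > 0"
  shows "\<exists>n. P (s n)"
proof -
  have "\<forall>\<^sub>F n in sequentially. s n \<in> {0<..} \<and> s n \<noteq> 0"
  proof (intro always_eventually allI)
    fix n show "s n \<in> {0<..} \<and> s n \<noteq> 0" using assms(3)[rule_format, of n] by auto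
  qed
  then have "filterlim s (at_right 0) sequentially" unfolding filterlim_at using assms(2) by auto
  then have "eventually (\<lambda>n. P (s n)) sequentially" using assms(1) unfolding filterlim_iff by blast
  then show ?thesis unfolding eventually_sequentially by blast
qed

lemma den_small:
  assumes "c > 0"
  shows "((\<lambda>e::real. e powr c * ell e powr p) \<longlongrightarrow> 0) (at_right 0)"
  unfolding ell_def using assms by real_asymp

context dulac_good begin

lemma orb_lim: assumes x0: "x0 \<in> {0<..<\<delta>0}" shows "(\<lambda>n. (f ^^ n) x0) \<longlonglongrightarrow> 0"
proof (rule order_tendstoI)
  fix a :: real assume "a < 0"
  then show "\<forall>\<^sub>F n in sequentially. a < (f ^^ n) x0"
  proof (intro always_eventually allI)
    fix n show "a < (f ^^ n) x0" using orb[OF x0, of n] \<open>a < 0\<close> by auto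
  qed
next
  fix a :: real assume a: "0 < a"
  obtain N where N: "(f ^^ N) x0 < a" using orb_to0[OF x0 a] by blast
  show "\<forall>\<^sub>F n in sequentially. (f ^^ n) x0 < a"
  proof (rule eventually_sequentiallyI)
    fix n assume "N \<le> n"
    then have "(f ^^ n) x0 \<le> (f ^^ N) x0" using orb_le_iff[OF x0] by simp
    then show "(f ^^ n) x0 < a" using N by simp
  qed
qed

lemma final:
  assumes x0: "x0 \<in> {0<..<\<delta>0}"
  shows "\<exists>k :: real \<Rightarrow> real.
           (\<forall>\<^sub>F \<epsilon> in at_right 0. cont_length \<Psi> d x0 \<epsilon> - disc_length f x0 \<epsilon>
               = \<epsilon> powr (2 - 1 / \<alpha>) * ell \<epsilon> powr (of_int m / \<alpha>) * k \<epsilon>) \<and>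
           k \<in> O[at_right 0](\<lambda>_. 1) \<and>
           high_amp_osc k \<and>
           (\<forall>c \<beta> \<gamma> :: real. \<not> (k \<sim>[at_right 0] (\<lambda>\<epsilon>. c * \<epsilon> powr \<beta> * ell \<epsilon> powr \<gamma>))) \<and>
           (\<exists>\<delta>'>0. (\<lambda>\<epsilon>. cont_length \<Psi> d x0 \<epsilon> - disc_length f x0 \<epsilon>)
               \<in> O[at_right 0](\<lambda>\<epsilon>. \<epsilon> powr (1 + \<delta>')))"
proof -
  obtain c1 c2 where c: "c1 > 0" "c2 > 0" and
    evc: "\<forall>\<^sub>F y in at_right 0. c1 * den \<alpha> m (g y / 2) \<le> W y \<and> W y \<le> c2 * den \<alpha> m (g y / 2)"
    using theta_bounds by blast
  obtain b1 where b1: "b1 > 0" "\<And>y. 0 < y \<Longrightarrow> y < b1 \<Longrightarrow> c1 * den \<alpha> m (g y / 2) \<le> W y \<and> W y \<le> c2 * den \<alpha> m (g y / 2)"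
    using evc unfolding eventually_at_right_field by auto
  obtain y1 where y1: "y1 > 0" "y1 \<le> \<delta>0" and
    me: "\<And>y z. y \<in> {0<..<y1} \<Longrightarrow> z \<in> {f y..y} \<Longrightarrow>
     \<bar>y - z - g y * (\<Psi> z - \<Psi> y) - ((\<Psi> z - \<Psi> y) - (\<Psi> z - \<Psi> y)\<^sup>2) * W y / 2\<bar> \<le> 1/16 * W y"
    using main_est[of "1/16"] by auto
  define Y0 where "Y0 = min (min b1 y1) x0 / 2"
  have Y0: "0 < Y0" "Y0 < b1" "Y0 < y1" "Y0 < x0" using b1 y1 x0 by (auto simp: Y0_def)
  have Y0in: "Y0 \<in> {0<..<\<delta>0}" using Y0 x0 by auto
  have gY: "g Y0 > 0" "g Y0 < g x0" "g Y0 < 1" using g_pos[OF Y0in] g_mono[OF Y0in x0 Y0(4)] f_in[OF Y0in] Y0in d0_le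
    unfolding g_def by auto
  define D where "D \<epsilon> = cont_length \<Psi> d x0 \<epsilon> - disc_length f x0 \<epsilon>" for \<epsilon>
  define k where "k \<epsilon> = D \<epsilon> / den \<alpha> m \<epsilon>" for \<epsilon>
  have core: "\<exists>y z. y \<in> {0<..<Y0} \<and> g y = 2 * \<epsilon> \<and> z \<in> {f y..y} \<and> 0 \<le> \<Psi> z - \<Psi> y \<and> \<Psi> z - \<Psi> y < 1 \<and>
     cont_crit \<Psi> d x0 \<epsilon> = \<Psi> y - \<Psi> x0 \<and> real (disc_crit f x0 \<epsilon>) = \<Psi> z - \<Psi> x0 \<and>
     D \<epsilon> = y - z - g y * (\<Psi> z - \<Psi> y) \<and>
     \<bar>D \<epsilon> - ((\<Psi> z - \<Psi> y) - (\<Psi> z - \<Psi> y)\<^sup>2) * W y / 2\<bar> \<le> 1/16 * W y \<and>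
     c1 * den \<alpha> m \<epsilon> \<le> W y \<and> W y \<le> c2 * den \<alpha> m \<epsilon>"
    if e: "0 < \<epsilon>" "2 * \<epsilon> < g Y0" for \<epsilon>
  proof -
    obtain y z where yz: "y \<in> {0<..<x0}" "g y = 2 * \<epsilon>" "z \<in> {f y..y}" "\<Psi> z - \<Psi> y < 1"
      "cont_crit \<Psi> d x0 \<epsilon> = \<Psi> y - \<Psi> x0" "real (disc_crit f x0 \<epsilon>) = \<Psi> z - \<Psi> x0"
      "D \<epsilon> = y - z - g y * (\<Psi> z - \<Psi> y)"
      using key[OF x0 e(1)] e(2) gY unfolding D_def by auto
    have yin: "y \<in> {0<..<\<delta>0}" using yz x0 by auto
    have yY: "y < Y0" using g_le_iff[OF Y0in yin] yz(2) e(2) by auto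
    have zin: "z \<in> {0<..<\<delta>0}" using yz(3) f_in[OF yin] yin by auto
    have t0: "0 \<le> \<Psi> z - \<Psi> y" using psi_le_iff[OF yin zin] yz(3) by auto
    have m1: "\<bar>D \<epsilon> - ((\<Psi> z - \<Psi> y) - (\<Psi> z - \<Psi> y)\<^sup>2) * W y / 2\<bar> \<le> 1/16 * W y"
      using me[of y z] yz yY Y0 by auto
    have "c1 * den \<alpha> m (g y / 2) \<le> W y \<and> W y \<le> c2 * den \<alpha> m (g y / 2)"
      using b1(2)[of y] yin yY Y0 by auto
    then show ?thesis using yz yY yin t0 m1 by (intro exI[of _ y] exI[of _ z]) auto
  qed
  have evsmall: "\<forall>\<^sub>F \<epsilon> in at_right 0. 0 < \<epsilon> \<and> 2 * \<epsilon> < g Y0"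
    using eventually_at_right_real[of 0 "g Y0 / 2"] gY by (auto elim!: eventually_mono)
  have kbound: "\<bar>k \<epsilon>\<bar> \<le> c2" and Dbound: "\<bar>D \<epsilon>\<bar> \<le> c2 * den \<alpha> m \<epsilon>" and dpos: "den \<alpha> m \<epsilon> > 0"
    if e: "0 < \<epsilon>" "2 * \<epsilon> < g Y0" for \<epsilon>
  proof -
    obtain y z where yz: "y \<in> {0<..<Y0}" "0 \<le> \<Psi> z - \<Psi> y" "\<Psi> z - \<Psi> y < 1"
      "\<bar>D \<epsilon> - ((\<Psi> z - \<Psi> y) - (\<Psi> z - \<Psi> y)\<^sup>2) * W y / 2\<bar> \<le> 1/16 * W y"
      "W y \<le> c2 * den \<alpha> m \<epsilon>"
      using core[OF e] by blast
    define t where "t = \<Psi> z - \<Psi> y"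
    have yin: "y \<in> {0<..<\<delta>0}" using yz Y0in by auto
    have Wp: "W y > 0" using W_pos[OF yin] .
    have tt1: "t - t\<^sup>2 = t * (1 - t)" by (simp add: power2_eq_square algebra_simps)
    have tt2: "1/4 - (t - t\<^sup>2) = (t - 1/2)\<^sup>2" by (simp add: power2_eq_square algebra_simps)
    have t01: "0 \<le> t" "t < 1" using yz unfolding t_def by auto
    have tt: "0 \<le> t - t\<^sup>2" "t - t\<^sup>2 \<le> 1/4"
      unfolding tt1 using t01 apply simp
      using tt2 zero_le_power2[of "t - 1/2"] unfolding tt1 by linarith
    have P: "0 \<le> (t - t\<^sup>2) * W y / 2" "(t - t\<^sup>2) * W y / 2 \<le> 1/4 * W y / 2"
      using tt Wp by (auto intro!: mult_right_mono divide_right_mono)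
    have "\<bar>D \<epsilon>\<bar> \<le> W y" using yz(4)[folded t_def, unfolded abs_le_iff] P Wp unfolding abs_le_iff by linarith
    show Db: "\<bar>D \<epsilon>\<bar> \<le> c2 * den \<alpha> m \<epsilon>" using \<open>\<bar>D \<epsilon>\<bar> \<le> W y\<close> yz(5) by linarith
    show dp: "den \<alpha> m \<epsilon> > 0" using den_pos e gY by auto
    show "\<bar>k \<epsilon>\<bar> \<le> c2" unfolding k_def using Db dp by (simp add: abs_div divide_le_eq)
  qed
  have eqv: "\<forall>\<^sub>F \<epsilon> in at_right 0. D \<epsilon> = \<epsilon> powr (2 - 1 / \<alpha>) * ell \<epsilon> powr (of_int m / \<alpha>) * k \<epsilon>"
    using evsmall
  proof eventually_elim
    case (elim \<epsilon>)
    have "\<epsilon> powr (2 - 1 / \<alpha>) * ell \<epsilon> powr (of_int m / \<alpha>) \<noteq> 0"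
      using dpos[OF elim[THEN conjunct1] elim[THEN conjunct2]] unfolding den_def by (metis less_irrefl)
    then show ?case unfolding k_def den_def by simp
  qed
  have kO: "k \<in> O[at_right 0](\<lambda>_. 1)"
    by (rule bigoI[where c = c2]) (use evsmall in eventually_elim, use kbound in auto)
  define xs where "xs n = (f ^^ n) x0" for n
  have xs: "xs n \<in> {0<..<\<delta>0}" "\<Psi> (xs n) = \<Psi> x0 + real n" for n using orb[OF x0] by (auto simp: xs_def)
  have xs_le: "xs n \<le> xs j \<longleftrightarrow> j \<le> n" for n j using orb_le_iff[OF x0] by (simp add: xs_def)
  have xs_lim: "xs \<longlonglongrightarrow> 0" using orb_lim[OF x0] unfolding xs_def .
  obtain N0 where N0: "xs N0 < Y0" using orb_to0[OF x0 Y0(1)] by (auto simp: xs_def)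
  have gx: "g y < y" if "y \<in> {0<..<\<delta>0}" for y using f_in[OF that] by (auto simp: g_def)
  define yy where "yy n = flow \<Psi> d (real (N0 + n) + 1/2) x0" for n
  have yy: "yy n \<in> {0<..<\<delta>0}" "\<Psi> (yy n) = \<Psi> x0 + (real (N0 + n) + 1/2)" for n
    using flow_char[OF x0, of "real (N0 + n) + 1/2"] x0 by (auto simp: yy_def)
  have yy_le: "yy n \<le> xs (N0 + n)" for n
    using psi_le_iff[OF xs(1) yy(1), of "N0 + n" n] xs(2) yy(2) by auto
  define e1 where "e1 n = g (xs (Suc n)) / 2" for n
  define e2 where "e2 n = g (yy n) / 2" for n
  have e1pos: "e1 n > 0" for n using g_pos[OF xs(1)] by (simp add: e1_def)
  have e2pos: "e2 n > 0" for n using g_pos[OF yy(1)] by (simp add: e2_def)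
  have e1lim: "e1 \<longlonglongrightarrow> 0"
  proof (rule tendsto_sandwich[of "\<lambda>_. 0" _ _ xs])
    show "\<forall>\<^sub>F n in sequentially. 0 \<le> e1 n" using e1pos by (auto intro!: always_eventually less_imp_le)
    show "\<forall>\<^sub>F n in sequentially. e1 n \<le> xs n"
    proof (intro always_eventually allI)
      fix n
      have "xs (Suc n) \<le> xs n" using xs_le by simp
      then show "e1 n \<le> xs n" using gx[OF xs(1), of "Suc n"] g_pos[OF xs(1), of "Suc n"] by (simp add: e1_def)
    qed
  qed (use xs_lim in auto)
  have e2lim: "e2 \<longlonglongrightarrow> 0"
  proof (rule tendsto_sandwich[of "\<lambda>_. 0" _ _ xs])
    show "\<forall>\<^sub>F n in sequentially. 0 \<le> e2 n" using e2pos by (auto intro!: always_eventually less_imp_le)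
    show "\<forall>\<^sub>F n in sequentially. e2 n \<le> xs n"
    proof (intro always_eventually allI)
      fix n
      have "xs (N0 + n) \<le> xs n" using xs_le by simp
      then show "e2 n \<le> xs n" using yy_le[of n] gx[OF yy(1), of n] g_pos[OF yy(1), of n] by (simp add: e2_def)
    qed
  qed (use xs_lim in auto)
  have k1: "k (e1 n) = 0" for n
  proof -
    let ?y = "xs (Suc n)"
    have yx: "?y < x0" using psi_le_iff[OF x0 xs(1), of "Suc n"] xs(2)[of "Suc n"]
      by (cases "xs (Suc n) = x0") auto
    have "2 * e1 n < g x0" using g_mono[OF xs(1) x0 yx] by (simp add: e1_def)
    then obtain y z where yz: "y \<in> {0<..<x0}" "g y = 2 * e1 n" "z \<in> {f y..y}" "\<Psi> z - \<Psi> y < 1"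
      "cont_crit \<Psi> d x0 (e1 n) = \<Psi> y - \<Psi> x0" "real (disc_crit f x0 (e1 n)) = \<Psi> z - \<Psi> x0"
      "D (e1 n) = y - z - g y * (\<Psi> z - \<Psi> y)"
      using key[OF x0 e1pos[of n]] unfolding D_def by blast
    have yin: "y \<in> {0<..<\<delta>0}" using yz x0 by auto
    have "g y = g ?y" using yz(2) by (simp add: e1_def)
    then have yeq: "y = ?y" using g_le_iff[OF yin xs(1)[of "Suc n"]] g_le_iff[OF xs(1)[of "Suc n"] yin] by auto
    have zin: "z \<in> {0<..<\<delta>0}" using yz(3) f_in[OF yin] yin by auto
    have t0: "0 \<le> \<Psi> z - \<Psi> y" using psi_le_iff[OF yin zin] yz(3) by auto
    define j where "j = disc_crit f x0 (e1 n)"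
    have "real j - real (Suc n) = \<Psi> z - \<Psi> y" using yz(6) xs(2)[of "Suc n"] yeq by (simp add: j_def)
    then have "real (Suc n) \<le> real j" "real j < real (Suc n + 1)" using t0 yz(4) by auto
    then have "Suc n \<le> j" "j < Suc n + 1" by (simp_all only: of_nat_le_iff of_nat_less_iff)
    then have "j = Suc n" by simp
    then have "\<Psi> z = \<Psi> y" using yz(6) xs(2)[of "Suc n"] yeq by (simp add: j_def)
    then have "z = y" using psi_inj[of z y] inD zin yin by auto
    then show ?thesis using yz(7) by (simp add: k_def)
  qed
  have k2: "k (e2 n) \<ge> c1 / 16" for n
  proof -
    have yyY: "yy n < Y0" using yy_le[of n] xs_le[of "N0 + n" N0] N0 by auto
    have "2 * e2 n < g Y0" using g_mono[OF yy(1) Y0in yyY] by (simp add: e2_def)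
    then obtain y z where yz: "y \<in> {0<..<Y0}" "g y = 2 * e2 n" "z \<in> {f y..y}" "0 \<le> \<Psi> z - \<Psi> y" "\<Psi> z - \<Psi> y < 1"
      "real (disc_crit f x0 (e2 n)) = \<Psi> z - \<Psi> x0"
      "\<bar>D (e2 n) - ((\<Psi> z - \<Psi> y) - (\<Psi> z - \<Psi> y)\<^sup>2) * W y / 2\<bar> \<le> 1/16 * W y"
      "c1 * den \<alpha> m (e2 n) \<le> W y"
      using core[OF e2pos[of n]] by blast
    have yin: "y \<in> {0<..<\<delta>0}" using yz Y0in by auto
    have "g y = g (yy n)" using yz(2) by (simp add: e2_def)
    then have yeq: "y = yy n" using g_le_iff[OF yin yy(1)[of n]] g_le_iff[OF yy(1)[of n] yin] by auto
    define j where "j = disc_crit f x0 (e2 n)"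
    have tj: "\<Psi> z - \<Psi> y = real j - real (N0 + n) - 1/2" using yz(6) yy(2)[of n] yeq by (simp add: j_def)
    then have "real (N0 + n) < real j" "real j < real (N0 + n + 2)" using yz(4,5) by auto
    then have "N0 + n < j" "j < N0 + n + 2" by (simp_all only: of_nat_less_iff)
    then have "j = N0 + n + 1" by simp
    then have t: "\<Psi> z - \<Psi> y = 1/2" using tj by simp
    have Wp: "W y > 0" using W_pos[OF yin] .
    have "D (e2 n) \<ge> W y / 16" using yz(7)[unfolded t abs_le_iff] by (simp add: power2_eq_square)
    then have Dge: "D (e2 n) \<ge> c1 / 16 * den \<alpha> m (e2 n)" using yz(8) by linarith
    have dp: "den \<alpha> m (e2 n) > 0" using dpos[OF e2pos \<open>2 * e2 n < g Y0\<close>] .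
    show ?thesis unfolding k_def using Dge dp by (simp add: le_divide_eq)
  qed
  have k2': "c1 / 32 < k (e2 n)" for n using k2[of n] c by linarith
  have hao: "high_amp_osc k"
    unfolding high_amp_osc_def
    by (rule exI[of _ e1], rule exI[of _ e2], rule exI[of _ "c1 / 64"], rule exI[of _ "c1 / 32"])
       (use c e1pos e2pos e1lim e2lim k1 k2' in auto)
  have noas: "\<not> (k \<sim>[at_right 0] (\<lambda>\<epsilon>. c * \<epsilon> powr \<beta> * ell \<epsilon> powr \<gamma>))" for c \<beta> \<gamma>
  proof
    assume H: "k \<sim>[at_right 0] (\<lambda>\<epsilon>. c * \<epsilon> powr \<beta> * ell \<epsilon> powr \<gamma>)"
    have Z: "\<forall>\<^sub>F \<epsilon> in at_right 0. k \<epsilon> = 0 \<longleftrightarrow> c * \<epsilon> powr \<beta> * ell \<epsilon> powr \<gamma> = 0"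
      using asymp_equiv_eventually_zeros[OF H] .
    show False
    proof (cases "c = 0")
      case True
      then have "\<forall>\<^sub>F \<epsilon> in at_right 0. k \<epsilon> = 0" using Z by simp
      then obtain n where "k (e2 n) = 0" using seq_pick[OF _ e2lim] e2pos by blast
      then show False using k2[of n] c by simp
    next
      case False
      have "\<forall>\<^sub>F \<epsilon> in at_right 0. k \<epsilon> \<noteq> 0" using Z ev01
      proof eventually_elim
        case (elim \<epsilon>)
        have "ell \<epsilon> > 0" using ell_pos elim by auto
        then show ?case using elim False by simp
      qed
      then obtain n where "k (e1 n) \<noteq> 0" using seq_pick[OF _ e1lim] e1pos by blast
      then show False using k1[of n] by simp
    qed
  qed
  define \<delta>' where "\<delta>' = (1 - 1 / \<alpha>) / 2"
  have d': "\<delta>' > 0" using alpha_gt by (simp add: \<delta>'_def)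
  have "\<forall>\<^sub>F \<epsilon> in at_right 0. \<epsilon> powr \<delta>' * ell \<epsilon> powr (of_int m / \<alpha>) < 1"
    using den_small[OF d', of "of_int m / \<alpha>"] by (rule order_tendstoD) simp
  then have Obound: "(\<lambda>\<epsilon>. D \<epsilon>) \<in> O[at_right 0](\<lambda>\<epsilon>. \<epsilon> powr (1 + \<delta>'))"
  proof -
    assume ev1: "\<forall>\<^sub>F \<epsilon> in at_right 0. \<epsilon> powr \<delta>' * ell \<epsilon> powr (of_int m / \<alpha>) < 1"
    show ?thesis
    proof (rule bigoI[where c = c2])
      show "\<forall>\<^sub>F \<epsilon> in at_right 0. norm (D \<epsilon>) \<le> c2 * norm (\<epsilon> powr (1 + \<delta>'))"
        using ev1 evsmall
      proof eventually_elim
        case (elim \<epsilon>)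
        have e: "0 < \<epsilon>" "2 * \<epsilon> < g Y0" using elim by auto
        have "den \<alpha> m \<epsilon> = \<epsilon> powr (1 + \<delta>') * (\<epsilon> powr \<delta>' * ell \<epsilon> powr (of_int m / \<alpha>))"
        proof -
          have exeq: "2 - 1 / \<alpha> = (1 + \<delta>') + \<delta>'" by (simp add: \<delta>'_def field_simps)
          have pa: "\<epsilon> powr ((1 + \<delta>') + \<delta>') = \<epsilon> powr (1 + \<delta>') * \<epsilon> powr \<delta>'" by (rule powr_add)
          show ?thesis unfolding den_def exeq by (simp only: pa mult.assoc)
        qed
        also have "\<dots> \<le> \<epsilon> powr (1 + \<delta>') * 1" using elim by (intro mult_left_mono) auto
        finally have "den \<alpha> m \<epsilon> \<le> \<epsilon> powr (1 + \<delta>')" by simp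
        then have "c2 * den \<alpha> m \<epsilon> \<le> c2 * \<epsilon> powr (1 + \<delta>')" using c by (intro mult_left_mono) auto
        then show ?case using Dbound[OF e] by simp
      qed
    qed
  qed
  show ?thesis
    by (rule exI[of _ k]) (use eqv kO hao noas d' Obound in \<open>auto simp: D_def\<close>)
qed
end

theorem theoremB:
  fixes f \<xi> \<Psi> :: "real \<Rightarrow> real" and a \<alpha> d :: real and m :: int
  assumes "parabolic_dulac_germ f"
    and "a > 0" and "\<alpha> > 1" and "m \<le> 0"
    and "(\<lambda>x. f x - (x - a * x powr \<alpha> * ell x powr of_int m))
           \<in> o[at_right 0](\<lambda>x. x powr \<alpha> * ell x powr of_int m)"
    and "d > 0"
    and "real_analytic_on \<xi> {0<..<d}"
    and "\<xi> \<sim>[at_right 0] (\<lambda>x. - a * x powr \<alpha> * ell x powr of_int m)"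
    and "(\<lambda>x. deriv \<xi> x) \<sim>[at_right 0] (\<lambda>x. - a * \<alpha> * x powr (\<alpha> - 1) * ell x powr of_int m)"
    and "(\<lambda>x. \<xi> x + (x - f x) + \<xi> x * deriv \<xi> x / 2)
           \<in> o[at_right 0](\<lambda>x. x powr (2 * \<alpha> - 1) * ell x powr of_int (2 * m))"
    and "\<forall>x\<in>{0<..<d}. \<xi> x \<noteq> 0 \<and> (\<Psi> has_real_derivative 1 / \<xi> x) (at x)"
    and "\<forall>x\<in>{0<..<d}. f x \<in> {0<..<d} \<and> \<Psi> (f x) = \<Psi> x + 1"
  shows "\<exists>\<delta>>0. \<forall>x0\<in>{0<..<\<delta>}. \<exists>k :: real \<Rightarrow> real.
           (\<forall>\<^sub>F \<epsilon> in at_right 0. cont_length \<Psi> d x0 \<epsilon> - disc_length f x0 \<epsilon>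
               = \<epsilon> powr (2 - 1 / \<alpha>) * ell \<epsilon> powr (of_int m / \<alpha>) * k \<epsilon>) \<and>
           k \<in> O[at_right 0](\<lambda>_. 1) \<and>
           high_amp_osc k \<and>
           (\<forall>c \<beta> \<gamma> :: real. \<not> (k \<sim>[at_right 0] (\<lambda>\<epsilon>. c * \<epsilon> powr \<beta> * ell \<epsilon> powr \<gamma>))) \<and>
           (\<exists>\<delta>'>0. (\<lambda>\<epsilon>. cont_length \<Psi> d x0 \<epsilon> - disc_length f x0 \<epsilon>)
               \<in> O[at_right 0](\<lambda>\<epsilon>. \<epsilon> powr (1 + \<delta>')))"
proof -
  interpret dulac_setup f \<xi> \<Psi> a \<alpha> d m
    by (unfold_locales) (use assms in auto)
  obtain \<delta>0 where "\<delta>0 > 0" "\<delta>0 \<le> d" "\<delta>0 \<le> 1" and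
    gd: "\<forall>x\<in>{0<..<\<delta>0}. \<xi> x < 0 \<and> deriv \<xi> x < 0 \<and> g x > 0 \<and> (f has_real_derivative deriv f x) (at x)"
    using good_exists by blast
  interpret dulac_good f \<xi> \<Psi> a \<alpha> d m \<delta>0
    by (unfold_locales) (use \<open>\<delta>0 > 0\<close> \<open>\<delta>0 \<le> d\<close> \<open>\<delta>0 \<le> 1\<close> gd in auto)
  show ?thesis using final d0_pos by blast
qed

end
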